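(* Let $L\ge2$, $w\in\mathbb R\setminus\{0\}$, $\theta\in\mathbb R$, and consider on $\mathcal F(\mathbb C^L)$ the Hamiltonians, for $\alpha\in[0,\pi]$, $$\mathbf H^{\mathrm{Kit}}_\Lambda(\alpha)=w\sum_{j=1}^{L-1}\big(-{\mathfrak a}_j^*{\mathfrak a}_{j+1}-{\mathfrak a}_{j+1}^*{\mathfrak a}_j+e^{i\theta}{\mathfrak a}_j{\mathfrak a}_{j+1}+e^{-i\theta}{\mathfrak a}_{j+1}^*{\mathfrak a}_j^*\big)+w\big(-e^{-i\alpha}{\mathfrak a}_L^*{\mathfrak a}_1-e^{i\alpha}{\mathfrak a}_1^*{\mathfrak a}_L+e^{i\theta}e^{i\alpha}{\mathfrak a}_L{\mathfrak a}_1+e^{-i\theta}e^{-i\alpha}{\mathfrak a}_1^*{\mathfrak a}_L^*\big)$$ (the Kitaev chain with $\mu=0$, $\Delta=e^{i\theta}w$ and a flux $\alpha$ inserted in the boundary bond). Then the $\mathbb Z_2$-valued spectral flow of the path $\alpha\in[0,\pi]\mapsto\mathbf H^{\mathrm{Kit}}_\Lambda(\alpha)$ is non-trivial, i.e. $\mathrm{Sf}_2(A_\Lambda(0),A_\Lambda(\pi))=-1$.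
   Context: $\mathcal F(\mathbb C^L)$ is the fermionic Fock space with CAR operators ${\mathfrak a}_j$, $j=1,\dots,L$. Majorana operators: ${\mathfrak b}_{2j-1}=e^{i\theta/2}{\mathfrak a}_j+e^{-i\theta/2}{\mathfrak a}_j^*$, ${\mathfrak b}_{2j}=-ie^{i\theta/2}{\mathfrak a}_j+ie^{-i\theta/2}{\mathfrak a}_j^*$, ordered as ${\mathfrak b}=({\mathfrak b}_1,{\mathfrak b}_3,\dots,{\mathfrak b}_{2L-1},{\mathfrak b}_2,\dots,{\mathfrak b}_{2L})^t$. In these variables $\mathbf H^{\mathrm{Kit}}_\Lambda(\alpha)=iw\sum_{j=1}^{L-1}{\mathfrak b}_{2j}{\mathfrak b}_{2j+1}+iw\cos(\alpha){\mathfrak b}_{2L}{\mathfrak b}_1-iw\sin(\alpha){\mathfrak b}_{2L}{\mathfrak b}_2$, and $A_\Lambda(\alpha)$ denotes the unique real skew-symmetric matrix with $\mathbf H^{\mathrm{Kit}}_\Lambda(\alpha)=\frac i2{\mathfrak b}^tA_\Lambda(\alpha){\mathfrak b}$. For invertible real skew-symmetric $T_0,T_1$, $\mathrm{Sf}_2(T_0,T_1)=\mathrm{sgn}\det(M)$ for any invertible real $M$ with $T_1=MT_0M^*$; the $\mathbb Z_2$-valued spectral flow of a path with invertible endpoints is $\mathrm{Sf}_2$ of its endpoints. *)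

theory Defs
  imports Complex_Main "Jordan_Normal_Form.Determinant"
begin

text \<open>Operators on the fermionic Fock space F(C^L), represented by their matrix
kernels with respect to the occupation-number basis |S>, S a subset of {1..L}
(S = set of occupied modes). X S T is the matrix element <S|X|T>.\<close>

type_synonym fock_op = "nat set \<Rightarrow> nat set \<Rightarrow> complex"

definition op_mul :: "nat \<Rightarrow> fock_op \<Rightarrow> fock_op \<Rightarrow> fock_op" where
  "op_mul L X Y = (\<lambda>S T. \<Sum>U\<in>Pow {1..L}. X S U * Y U T)"

definition op_adj :: "fock_op \<Rightarrow> fock_op" where
  "op_adj X = (\<lambda>S T. cnj (X T S))"

definition op_eq :: "nat \<Rightarrow> fock_op \<Rightarrow> fock_op \<Rightarrow> bool" where
  "op_eq L X Y \<longleftrightarrow> (\<forall>S\<in>Pow {1..L}. \<forall>T\<in>Pow {1..L}. X S T = Y S T)"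

text \<open>CAR annihilation operator a_j (Jordan-Wigner sign convention):
a_j |T> = (-1)^{#{k in T. k < j}} |T - {j}> if j in T, and 0 otherwise.\<close>
definition ann :: "nat \<Rightarrow> fock_op" where
  "ann j = (\<lambda>S T. if j \<in> T \<and> S = T - {j} then (-1) ^ card {k\<in>T. k < j} else 0)"

definition cre :: "nat \<Rightarrow> fock_op" where
  "cre j = op_adj (ann j)"

definition kit_H :: "nat \<Rightarrow> real \<Rightarrow> real \<Rightarrow> real \<Rightarrow> fock_op" where
  "kit_H L w \<theta> \<alpha> = (\<lambda>S T.
     (\<Sum>j\<in>{1..L-1}. complex_of_real w *
        (- op_mul L (cre j) (ann (j+1)) S T - op_mul L (cre (j+1)) (ann j) S T
         + cis \<theta> * op_mul L (ann j) (ann (j+1)) S T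
         + cis (-\<theta>) * op_mul L (cre (j+1)) (cre j) S T))
   + complex_of_real w *
        (- cis (-\<alpha>) * op_mul L (cre L) (ann 1) S T - cis \<alpha> * op_mul L (cre 1) (ann L) S T
         + cis \<theta> * cis \<alpha> * op_mul L (ann L) (ann 1) S T
         + cis (-\<theta>) * cis (-\<alpha>) * op_mul L (cre 1) (cre L) S T))"

definition maj :: "real \<Rightarrow> nat \<Rightarrow> fock_op" where
  "maj \<theta> k = (if odd k
     then (\<lambda>S T. cis (\<theta>/2) * ann ((k+1) div 2) S T + cis (-\<theta>/2) * cre ((k+1) div 2) S T)
     else (\<lambda>S T. - \<i> * cis (\<theta>/2) * ann (k div 2) S T + \<i> * cis (-\<theta>/2) * cre (k div 2) S T))"

text \<open>The ordered vector b = (b_1,b_3,...,b_{2L-1},b_2,...,b_{2L}), 0-based index p < 2L.\<close>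
definition bvec :: "nat \<Rightarrow> real \<Rightarrow> nat \<Rightarrow> fock_op" where
  "bvec L \<theta> p = (if p < L then maj \<theta> (2*p+1) else maj \<theta> (2*(p-L)+2))"

definition maj_quad :: "nat \<Rightarrow> real \<Rightarrow> real mat \<Rightarrow> fock_op" where
  "maj_quad L \<theta> A = (\<lambda>S T. (\<i>/2) *
     (\<Sum>p<2*L. \<Sum>q<2*L. complex_of_real (A $$ (p,q)) * op_mul L (bvec L \<theta> p) (bvec L \<theta> q) S T))"

definition kit_A :: "nat \<Rightarrow> real \<Rightarrow> real \<Rightarrow> real \<Rightarrow> real mat" where
  "kit_A L w \<theta> \<alpha> = (THE A. A \<in> carrier_mat (2*L) (2*L) \<and> transpose_mat A = - A
       \<and> op_eq L (kit_H L w \<theta> \<alpha>) (maj_quad L \<theta> A))"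

definition Sf2 :: "real mat \<Rightarrow> real mat \<Rightarrow> real" where
  "Sf2 T0 T1 = (SOME s. \<exists>M \<in> carrier_mat (dim_row T0) (dim_row T0).
       invertible_mat M \<and> T1 = M * T0 * transpose_mat M \<and> s = sgn (det M))"

end

theory Submission
  imports Defs "HOL-Library.FuncSet"
begin


definition pfx :: "nat \<Rightarrow> real mat \<Rightarrow> real" where
 "pfx n A = (\<Sum>p \<in> {p. p permutes {0..<2*n}}. signof p * (\<Prod>i<n. A $$ (p (2*i), p (2*i+1))))"

lemma prod_pairs: fixes n :: nat shows "(\<Prod>x<2*n. h x) = (\<Prod>i<n. h (2*i) * (h (2*i+1) :: 'a::comm_monoid_mult))"
proof (induction n)
  case (Suc n)
  have "prod h {..<2 * Suc n} = prod h {..<Suc (Suc (2*n))}" by simp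
  also have "\<dots> = prod h {..<2*n} * (h (2*n) * h (2*n+1))"
    by (simp only: prod.lessThan_Suc) (simp add: ac_simps)
  finally show ?case using Suc by (simp only: prod.lessThan_Suc)
qed simp

lemma BAB_entry:
  assumes "B \<in> carrier_mat N N" "A \<in> carrier_mat N N" "x < N" "y < N"
  shows "(B * A * transpose_mat B) $$ (x,y) = (\<Sum>k\<in>{0..<N}. \<Sum>l\<in>{0..<N}. B$$(x,k) * A$$(k,l) * B$$(y,l))"
  using assms by (simp add: index_mult_mat scalar_prod_def sum_distrib_left mult.assoc)

definition unpair :: "nat \<Rightarrow> (nat \<Rightarrow> nat\<times>nat) \<Rightarrow> nat \<Rightarrow> nat" where
  "unpair n h x = (if x < 2*n then (if even x then fst (h (x div 2)) else snd (h (x div 2))) else x)"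
definition topair :: "nat \<Rightarrow> (nat \<Rightarrow> nat) \<Rightarrow> nat \<Rightarrow> nat\<times>nat" where
  "topair n f i = (if i<n then (f(2*i), f(2*i+1)) else undefined)"

lemma unpair_even: "i < n \<Longrightarrow> unpair n h (2*i) = fst (h i)"
  unfolding unpair_def by simp
lemma unpair_odd: "i < n \<Longrightarrow> unpair n h (Suc (2*i)) = snd (h i)"
  unfolding unpair_def by simp
lemma unpair_odd': "i < n \<Longrightarrow> unpair n h (2*i+1) = snd (h i)"
  unfolding unpair_def by simp

lemma topair_unpair: "h \<in> PiE {..<n} (\<lambda>_. X) \<Longrightarrow> topair n (unpair n h) = h"
proof
  fix i assume h: "h \<in> PiE {..<n} (\<lambda>_. X)"
  show "topair n (unpair n h) i = h i"
  proof (cases "i < n")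
    case True then show ?thesis by (simp add: topair_def unpair_even unpair_odd)
  next
    case False then show ?thesis using h by (simp add: topair_def PiE_def extensional_def)
  qed
qed

lemma unpair_topair:
  assumes f: "\<forall>i. i \<notin> {0..<2*n} \<longrightarrow> f i = i"
  shows "unpair n (topair n f) = f"
proof
  fix x
  show "unpair n (topair n f) x = f x"
  proof (cases "x < 2*n")
    case True
    then have lt: "x div 2 < n" by auto
    have e: "even x \<Longrightarrow> 2*(x div 2) = x" and o: "odd x \<Longrightarrow> 2*(x div 2)+1 = x" by presburger+
    show ?thesis
    proof (cases "even x")
      case True then show ?thesis using lt e \<open>x < 2*n\<close> by (simp add: unpair_def topair_def)
    next
      case False then show ?thesis using lt o \<open>x < 2*n\<close> by (simp add: unpair_def topair_def)
    qed
  next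
    case False then show ?thesis using f by (simp add: unpair_def)
  qed
qed

lemma expand_pairs:
  fixes G :: "nat \<Rightarrow> nat \<Rightarrow> nat \<Rightarrow> real"
  shows "(\<Prod>i<n. \<Sum>k\<in>{0..<2*n}. \<Sum>l\<in>{0..<2*n}. G i k l) =
    (\<Sum>f\<in>{f. (\<forall>i\<in>{0..<2*n}. f i \<in> {0..<2*n}) \<and> (\<forall>i. i \<notin> {0..<2*n} \<longrightarrow> f i = i)}.
       \<Prod>i<n. G i (f (2*i)) (f (2*i+1)))"
proof -
  let ?U = "{0..<2*n}"
  let ?F = "{f. (\<forall>i\<in>?U. f i \<in> ?U) \<and> (\<forall>i. i \<notin> ?U \<longrightarrow> f i = i)}"
  have "(\<Prod>i<n. \<Sum>k\<in>?U. \<Sum>l\<in>?U. G i k l) = (\<Prod>i<n. \<Sum>kl\<in>?U\<times>?U. (case kl of (k,l) \<Rightarrow> G i k l))"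
    by (intro prod.cong refl) (simp add: sum.cartesian_product)
  also have "\<dots> = (\<Sum>h\<in>PiE {..<n} (\<lambda>_. ?U\<times>?U). \<Prod>i<n. (case h i of (k,l) \<Rightarrow> G i k l))"
    by (rule prod_sum_PiE) auto
  also have "\<dots> = (\<Sum>f\<in>?F. \<Prod>i<n. G i (f (2*i)) (f (2*i+1)))"
  proof (rule sum.reindex_bij_witness[where i = "topair n" and j = "unpair n"])
    fix h assume h: "h \<in> PiE {..<n} (\<lambda>_. ?U\<times>?U)"
    show "topair n (unpair n h) = h" using h by (rule topair_unpair)
    have hx: "h (x div 2) \<in> ?U\<times>?U" if "x < 2*n" for x
    proof -
      have "x div 2 \<in> {..<n}" using that by simp
      then show ?thesis by (rule PiE_mem[OF h])
    qed
    have "unpair n h x \<in> ?U" if "x \<in> ?U" for x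
    proof -
      from that have "x < 2*n" by simp
      from hx[OF this] have "fst (h (x div 2)) \<in> ?U" "snd (h (x div 2)) \<in> ?U" by (simp_all add: mem_Times_iff)
      then show ?thesis using \<open>x < 2*n\<close> unfolding unpair_def by simp
    qed
    moreover have "unpair n h x = x" if "x \<notin> ?U" for x using that unfolding unpair_def by simp
    ultimately show "unpair n h \<in> ?F" by blast
    show "(\<Prod>i<n. G i (unpair n h (2*i)) (unpair n h (2*i+1))) = (\<Prod>i<n. (case h i of (k,l) \<Rightarrow> G i k l))"
      by (intro prod.cong refl) (simp add: unpair_even unpair_odd unpair_odd' split: prod.splits)
  next
    fix f assume f: "f \<in> ?F"
    then show "unpair n (topair n f) = f" by (intro unpair_topair) auto
    show "topair n f \<in> PiE {..<n} (\<lambda>_. ?U\<times>?U)"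
      using f by (auto simp: topair_def PiE_def extensional_def)
  qed
  finally show ?thesis .
qed


lemma pfx_law:
  assumes B: "B \<in> carrier_mat (2*n) (2*n)" and A: "A \<in> carrier_mat (2*n) (2*n)"
  shows "pfx n (B * A * transpose_mat B) = det B * pfx n A"
proof -
  define N where "N = 2*n"
  let ?U = "{0..<N}"
  define F where "F = {f. (\<forall>i\<in>?U. f i \<in> ?U) \<and> (\<forall>i. i \<notin> ?U \<longrightarrow> f i = i)}"
  let ?PU = "{p. p permutes ?U}"
  define PA where "PA f = (\<Prod>i<n. A$$(f(2*i), f(2*i+1)))" for f
  define M where "M f = mat N N (\<lambda>(x,y). B$$(y, f x))" for f
  have B': "B \<in> carrier_mat N N" and A': "A \<in> carrier_mat N N" using A B N_def by auto
  have finF: "finite F" unfolding F_def by (rule finite_bounded_functions) auto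
  have step1: "(\<Prod>i<n. (B*A*transpose_mat B)$$(p(2*i), p(2*i+1))) = (\<Sum>f\<in>F. PA f * (\<Prod>x\<in>?U. B$$(p x, f x)))"
    if p: "p permutes ?U" for p
  proof -
    have lt: "p (2*i) < N" "p(2*i+1) < N" if "i<n" for i
      using permutes_in_image[OF p, of "2*i"] permutes_in_image[OF p, of "2*i+1"] that N_def by auto
    have "(\<Prod>i<n. (B*A*transpose_mat B)$$(p(2*i), p(2*i+1))) =
        (\<Prod>i<n. \<Sum>k\<in>{0..<2*n}. \<Sum>l\<in>{0..<2*n}. B$$(p(2*i),k)*A$$(k,l)*B$$(p(2*i+1),l))"
      apply (rule prod.cong[OF refl])
      subgoal for i using BAB_entry[OF B' A' lt(1)[of i] lt(2)[of i]] by (simp add: N_def)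
      done
    also have "\<dots> = (\<Sum>f\<in>F. \<Prod>i<n. B$$(p(2*i),f(2*i))*A$$(f(2*i),f(2*i+1))*B$$(p(2*i+1),f(2*i+1)))"
      unfolding F_def N_def by (rule expand_pairs)
    also have "\<dots> = (\<Sum>f\<in>F. PA f * (\<Prod>x\<in>?U. B$$(p x, f x)))"
    proof (rule sum.cong[OF refl])
      fix f
      have "(\<Prod>x\<in>?U. B$$(p x, f x)) = (\<Prod>i<n. B$$(p(2*i),f(2*i)) * B$$(p(2*i+1),f(2*i+1)))"
        unfolding N_def atLeast0LessThan by (rule prod_pairs)
      then show "(\<Prod>i<n. B$$(p(2*i),f(2*i))*A$$(f(2*i),f(2*i+1))*B$$(p(2*i+1),f(2*i+1))) = PA f * (\<Prod>x\<in>?U. B$$(p x, f x))"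
        unfolding PA_def by (simp add: prod.distrib[symmetric] ac_simps)
    qed
    finally show ?thesis .
  qed
  have Mc: "M f \<in> carrier_mat N N" for f unfolding M_def by simp
  have detM: "det (M f) = (\<Sum>p\<in>?PU. signof p * (\<Prod>x\<in>?U. B$$(p x, f x)))" for f
    unfolding det_def'[OF Mc]
  proof (rule sum.cong[OF refl])
    fix p assume "p \<in> ?PU"
    then have p: "p permutes ?U" by simp
    show "signof p * (\<Prod>i = 0..<N. M f $$ (i, p i)) = signof p * (\<Prod>x\<in>?U. B$$(p x, f x))"
      using permutes_in_image[OF p] unfolding M_def by (auto intro!: prod.cong)
  qed
  have "pfx n (B * A * transpose_mat B) = (\<Sum>p\<in>?PU. signof p * (\<Sum>f\<in>F. PA f * (\<Prod>x\<in>?U. B$$(p x, f x))))"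
    unfolding pfx_def N_def[symmetric]
    apply (rule sum.cong[OF refl])
    subgoal for p by (subst step1) auto
    done
  also have "\<dots> = (\<Sum>f\<in>F. PA f * det (M f))"
    unfolding detM sum_distrib_left by (subst sum.swap) (simp add: ac_simps)
  also have "\<dots> = (\<Sum>f\<in>?PU. PA f * det (M f))"
  proof (rule sum.mono_neutral_right[OF finF])
    show "?PU \<subseteq> F" unfolding F_def using permutes_in_image permutes_not_in by fastforce
    show "\<forall>f\<in>F - ?PU. PA f * det (M f) = 0"
    proof
      fix f assume fF: "f \<in> F - ?PU"
      have "\<not> inj_on f ?U"
      proof
        assume "inj_on f ?U"
        from inj_on_nat_permutes[OF this] fF have "f permutes ?U" unfolding F_def by auto
        with fF show False by simp
      qed
      then obtain i j where ij: "f i = f j" "i \<noteq> j" "i < N" "j < N" unfolding inj_on_def by auto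
      have "row (M f) i = row (M f) j"
        by (rule eq_vecI) (simp_all add: M_def ij)
      then have "det (M f) = 0" by (rule det_identical_rows[OF Mc ij(2-4)])
      then show "PA f * det (M f) = 0" by simp
    qed
  qed
  also have "\<dots> = (\<Sum>f\<in>?PU. det B * (signof f * PA f))"
  proof (rule sum.cong[OF refl])
    fix f assume "f \<in> ?PU"
    then have f: "f permutes ?U" by simp
    have "M f = mat N N (\<lambda>(i,j). transpose_mat B $$ (f i, j))"
    proof (rule eq_matI)
      fix i j assume "i < dim_row (mat N N (\<lambda>(i,j). transpose_mat B $$ (f i, j)))"
        "j < dim_col (mat N N (\<lambda>(i,j). transpose_mat B $$ (f i, j)))"
      then have ij: "i<N" "j<N" by simp_all
      moreover have "f i < N" using permutes_in_image[OF f] ij by simp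
      ultimately show "M f $$ (i,j) = mat N N (\<lambda>(i,j). transpose_mat B $$ (f i, j)) $$ (i,j)"
        using B' unfolding M_def by simp
    qed (simp_all add: M_def)
    then have "det (M f) = signof f * det (transpose_mat B)"
      using det_permute_rows[OF _ f, of "transpose_mat B"] B' by simp
    also have "\<dots> = signof f * det B" using det_transpose[OF B'] by simp
    finally show "PA f * det (M f) = det B * (signof f * PA f)" by simp
  qed
  also have "\<dots> = det B * pfx n A"
    unfolding pfx_def PA_def N_def sum_distrib_left by simp
  finally show ?thesis .
qed

lemma pfx_smult:
  assumes A: "A \<in> carrier_mat (2*n) (2*n)"
  shows "pfx n (c \<cdot>\<^sub>m A) = c^n * pfx n A"
proof -
  have "pfx n (c \<cdot>\<^sub>m A) = (\<Sum>p \<in> {p. p permutes {0..<2*n}}. c^n * (signof p * (\<Prod>i<n. A $$ (p (2*i), p (2*i+1)))))"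
    unfolding pfx_def
  proof (rule sum.cong[OF refl])
    fix p assume "p \<in> {p. p permutes {0..<2*n}}"
    then have p: "p permutes {0..<2*n}" by simp
    have lt: "p (2*i) < 2*n" "p(2*i+1) < 2*n" if "i<n" for i
      using permutes_in_image[OF p, of "2*i"] permutes_in_image[OF p, of "2*i+1"] that by auto
    have "(\<Prod>i<n. (c \<cdot>\<^sub>m A) $$ (p (2*i), p (2*i+1))) = (\<Prod>i<n. c * A $$ (p (2*i), p (2*i+1)))"
      by (rule prod.cong[OF refl]) (use lt A in auto)
    also have "\<dots> = c^n * (\<Prod>i<n. A $$ (p (2*i), p (2*i+1)))" by (simp add: prod.distrib)
    finally show "signof p * (\<Prod>i<n. (c \<cdot>\<^sub>m A) $$ (p (2*i), p (2*i+1))) = c^n * (signof p * (\<Prod>i<n. A $$ (p (2*i), p (2*i+1))))"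
      by simp
  qed
  then show ?thesis unfolding pfx_def sum_distrib_left .
qed

definition jf :: "nat \<Rightarrow> nat \<Rightarrow> real" where
  "jf x y = (if even x \<and> y = x+1 then 1 else if odd x \<and> x = y+1 then -1 else 0)"

definition Jm :: "nat \<Rightarrow> real mat" where
  "Jm n = mat (2*n) (2*n) (\<lambda>(x,y). jf x y)"

lemma jf_skew: "jf y x = - jf x y"
  unfolding jf_def by auto

definition tt :: "nat \<Rightarrow> (nat \<Rightarrow> nat) \<Rightarrow> real" where
  "tt n p = signof p * (\<Prod>i<n. jf (p (2*i)) (p (2*i+1)))"

lemma tt_swap:
  assumes p: "p permutes {0..<2*n}" and i: "i < n"
  shows "tt n (p \<circ> transpose (2*i) (2*i+1)) = tt n p"
proof -
  let ?tr = "transpose (2*i) (2*i+1)"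
  have trp: "?tr permutes {0..<2*n}" by (rule permutes_swap_id) (use i in auto)
  have perm: "permutation f" if "f permutes {0..<2*n}" for f using that permutation_permutes by blast
  have sg: "sign (p \<circ> ?tr) = - sign p"
    using sign_compose[OF perm[OF p] perm[OF trp]] by (simp add: sign_swap_id)
  define g where "g j = jf (p (2*j)) (p (2*j+1))" for j
  define g' where "g' j = jf ((p \<circ> ?tr) (2*j)) ((p \<circ> ?tr) (2*j+1))" for j
  have "?tr (2*i) = 2*i+1" "?tr (2*i+1) = 2*i" by (auto simp: transpose_def)
  then have "g' i = jf (p (2*i+1)) (p (2*i))" unfolding g'_def by (simp only: o_apply)
  then have g'i: "g' i = - g i" unfolding g_def using jf_skew[of "p (2*i+1)" "p (2*i)"] by simp
  have rest: "g' j = g j" if "j \<in> {..<n} - {i}" for j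
  proof -
    from that have "j \<noteq> i" by simp
    then have "?tr (2*j) = 2*j" "?tr (2*j+1) = 2*j+1" by (auto simp: transpose_def)
    then show ?thesis unfolding g_def g'_def by simp
  qed
  have "(\<Prod>j<n. g' j) = g' i * (\<Prod>j\<in>{..<n}-{i}. g' j)" by (rule prod.remove) (use i in auto)
  also have "\<dots> = - (g i * (\<Prod>j\<in>{..<n}-{i}. g j))" using g'i rest by simp
  also have "g i * (\<Prod>j\<in>{..<n}-{i}. g j) = (\<Prod>j<n. g j)" by (rule prod.remove[symmetric]) (use i in auto)
  finally have "(\<Prod>j<n. g' j) = - (\<Prod>j<n. g j)" .
  then show ?thesis unfolding tt_def g_def g'_def sg by simp
qed

definition sw :: "nat \<Rightarrow> nat set \<Rightarrow> nat \<Rightarrow> nat" where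
  "sw n K x = (if x < 2*n \<and> x div 2 \<in> K then (if even x then x+1 else x-1) else x)"

lemma sw_insert:
  assumes "i \<notin> K" "i < n"
  shows "sw n (insert i K) = transpose (2*i) (2*i+1) \<circ> sw n K"
proof
  fix x
  show "sw n (insert i K) x = (transpose (2*i) (2*i+1) \<circ> sw n K) x"
  proof (cases "x < 2*n \<and> x div 2 = i")
    case True
    then have "x = 2*i \<or> x = 2*i+1" by auto
    then show ?thesis using True assms by (auto simp: sw_def transpose_def)
  next
    case False
    show ?thesis
    proof (cases "x < 2*n \<and> x div 2 \<in> K")
      case True
      then have ne: "x div 2 \<noteq> i" using assms by auto
      show ?thesis
      proof (cases "even x")
        case True
        then have "x + 1 \<noteq> 2*i" "x+1 \<noteq> 2*i+1" using ne by presburger+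
        then show ?thesis using \<open>even x\<close> \<open>x < 2*n \<and> x div 2 \<in> K\<close> ne by (auto simp: sw_def transpose_def)
      next
        case False
        then have "x - 1 \<noteq> 2*i" "x - 1 \<noteq> 2*i+1" using ne by presburger+
        then show ?thesis using \<open>odd x\<close> \<open>x < 2*n \<and> x div 2 \<in> K\<close> ne by (auto simp: sw_def transpose_def)
      qed
    next
      case False2: False
      have "x \<noteq> 2*i" "x \<noteq> 2*i+1" using False assms by auto
      then show ?thesis using False False2 assms by (auto simp: sw_def transpose_def)
    qed
  qed
qed

lemma sw_main:
  assumes "finite K" "K \<subseteq> {..<n}"
  shows "sw n K permutes {0..<2*n} \<and> (\<forall>p. p permutes {0..<2*n} \<longrightarrow> tt n (p \<circ> sw n K) = tt n p)"
  using assms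
proof (induction K rule: finite_induct)
  case empty
  have "sw n {} = id" by (auto simp: sw_def)
  then show ?case using permutes_id[of "{0..<2*n}"] by (simp add: id_def)
next
  case (insert i K)
  then have i: "i < n" and K: "K \<subseteq> {..<n}" by auto
  from insert.IH[OF K] have IH1: "sw n K permutes {0..<2*n}"
    and IH2: "\<And>p. p permutes {0..<2*n} \<Longrightarrow> tt n (p \<circ> sw n K) = tt n p" by (auto simp: comp_def)
  have trp: "transpose (2*i) (2*i+1) permutes {0..<2*n}" by (rule permutes_swap_id) (use i in auto)
  have eq: "sw n (insert i K) = transpose (2*i) (2*i+1) \<circ> sw n K" by (rule sw_insert) (use insert i in auto)
  show ?case
  proof
    show "sw n (insert i K) permutes {0..<2*n}" unfolding eq by (rule permutes_compose[OF IH1 trp])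
    show "\<forall>p. p permutes {0..<2*n} \<longrightarrow> tt n (p \<circ> sw n (insert i K)) = tt n p"
    proof (intro allI impI)
      fix p assume p: "p permutes {0..<2*n}"
      have "p \<circ> sw n (insert i K) = (p \<circ> transpose (2*i) (2*i+1)) \<circ> sw n K" unfolding eq by (simp add: o_assoc)
      then have "tt n (p \<circ> sw n (insert i K)) = tt n (p \<circ> transpose (2*i) (2*i+1))"
        using IH2[OF permutes_compose[OF trp p]] by simp
      also have "\<dots> = tt n p" by (rule tt_swap[OF p i])
      finally show "tt n (p \<circ> sw n (insert i K)) = tt n p" .
    qed
  qed
qed

definition dbl :: "nat \<Rightarrow> (nat \<Rightarrow> nat) \<Rightarrow> nat \<Rightarrow> nat" where
  "dbl n m x = (if x < 2*n then 2 * m (x div 2) + x mod 2 else x)"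

lemma dbl_tr_aux:
  fixes y r a b :: nat assumes "r < 2"
  shows "2 * transpose a b y + r = transpose (2*a) (2*b) (transpose (2*a+1) (2*b+1) (2*y+r))"
  using assms unfolding transpose_def by (auto; presburger)

lemma dbl_sign:
  assumes "m permutes {0..<n}"
  shows "dbl n m permutes {0..<2*n} \<and> sign (dbl n m) = 1"
  using assms(1) finite_atLeastLessThan
proof (induction rule: permutes_induct)
  case id
  have "dbl n id = id"
  proof
    fix x show "dbl n id x = id x" unfolding dbl_def by simp
  qed
  then show ?case using permutes_id[of "{0..<2*n}"] by (simp add: id_def)
next
  case (swap a b p)
  then have ab: "a < n" "b < n" "a \<noteq> b" by auto
  let ?t1 = "transpose (2*a) (2*b)" and ?t2 = "transpose (2*a+1) (2*b+1)"
  have eq: "dbl n (transpose a b \<circ> p) = ?t1 \<circ> (?t2 \<circ> dbl n p)"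
  proof
    fix x show "dbl n (transpose a b \<circ> p) x = (?t1 \<circ> (?t2 \<circ> dbl n p)) x"
    proof (cases "x < 2*n")
      case True
      have "x mod 2 < 2" by simp
      from dbl_tr_aux[OF this, of a b "p (x div 2)"] True show ?thesis unfolding dbl_def by simp
    next
      case False
      then have "x \<noteq> 2*a" "x \<noteq> 2*b" "x \<noteq> 2*a+1" "x \<noteq> 2*b+1" using ab by auto
      then show ?thesis using False unfolding dbl_def by (simp add: transpose_def)
    qed
  qed
  have t1: "?t1 permutes {0..<2*n}" by (rule permutes_swap_id) (use ab in auto)
  have t2: "?t2 permutes {0..<2*n}" by (rule permutes_swap_id) (use ab in auto)
  from swap.IH have d: "dbl n p permutes {0..<2*n}" and s: "sign (dbl n p) = 1" by auto
  have pc: "?t2 \<circ> dbl n p permutes {0..<2*n}" by (rule permutes_compose[OF d t2])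
  have perm: "permutation f" if "f permutes {0..<2*n}" for f using that permutation_permutes by blast
  have e1: "sign (?t1 \<circ> (?t2 \<circ> dbl n p)) = sign ?t1 * sign (?t2 \<circ> dbl n p)"
    by (rule sign_compose[OF perm[OF t1] perm[OF pc]])
  have e2: "sign (?t2 \<circ> dbl n p) = sign ?t2 * sign (dbl n p)"
    by (rule sign_compose[OF perm[OF t2] perm[OF d]])
  have e3: "sign ?t1 = -1" "sign ?t2 = -1" using ab by (simp_all add: sign_swap_id)
  have "sign (?t1 \<circ> (?t2 \<circ> dbl n p)) = 1" unfolding e1 e2 e3 s by simp
  then show ?case unfolding eq using permutes_compose[OF pc t1] by blast
qed


lemma tt_nonneg:
  assumes p: "p permutes {0..<2*n}"
  shows "tt n p \<ge> 0"
proof (cases "\<exists>i\<in>{..<n}. jf (p(2*i)) (p(2*i+1)) = 0")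
  case True
  then have z: "(\<Prod>i<n. jf (p (2*i)) (p (2*i+1))) = 0" by (intro prod_zero) auto
  show ?thesis unfolding tt_def z by simp
next
  case False
  then have nz: "jf (p(2*i)) (p(2*i+1)) \<noteq> 0" if "i < n" for i using that by auto
  define K where "K = {i. i < n \<and> odd (p (2*i))}"
  have KF: "finite K" "K \<subseteq> {..<n}" unfolding K_def by auto
  from sw_main[OF KF] p have swp: "sw n K permutes {0..<2*n}" and tteq: "tt n (p \<circ> sw n K) = tt n p" by auto
  define q where "q = p \<circ> sw n K"
  have q: "q permutes {0..<2*n}" unfolding q_def by (rule permutes_compose[OF swp p])
  have qe: "even (q (2*i)) \<and> q (2*i+1) = q (2*i) + 1" if i: "i < n" for i
  proof (cases "i \<in> K")
    case True
    then have "sw n K (2*i) = 2*i+1" "sw n K (2*i+1) = 2*i" using i by (auto simp: sw_def)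
    then have qq: "q (2*i) = p (2*i+1)" "q (2*i+1) = p (2*i)" unfolding q_def by auto
    from True have "odd (p (2*i))" unfolding K_def by auto
    with nz[OF i] have "p (2*i) = p (2*i+1) + 1" unfolding jf_def by (auto split: if_splits)
    with \<open>odd (p (2*i))\<close> show ?thesis unfolding qq by presburger
  next
    case False
    then have "sw n K (2*i) = 2*i" "sw n K (2*i+1) = 2*i+1" using i by (auto simp: sw_def)
    then have qq: "q (2*i) = p (2*i)" "q (2*i+1) = p (2*i+1)" unfolding q_def by auto
    from False i have "even (p (2*i))" unfolding K_def by auto
    with nz[OF i] have "p (2*i+1) = p (2*i) + 1" unfolding jf_def by (auto split: if_splits)
    with \<open>even (p (2*i))\<close> show ?thesis unfolding qq by simp
  qed
  have prod1: "(\<Prod>i<n. jf (q (2*i)) (q (2*i+1))) = 1"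
    by (rule prod.neutral) (use qe in \<open>auto simp: jf_def\<close>)
  define m where "m i = (if i < n then q (2*i) div 2 else i)" for i
  have qlt: "q x < 2*n" if "x < 2*n" for x using permutes_in_image[OF q] that by auto
  have mperm: "m permutes {0..<n}"
  proof (rule inj_on_nat_permutes)
    show "inj_on m {0..<n}"
    proof (rule inj_onI)
      fix i j assume ij: "i \<in> {0..<n}" "j \<in> {0..<n}" "m i = m j"
      then have "q (2*i) div 2 = q (2*j) div 2" unfolding m_def by auto
      moreover have "even (q (2*i))" "even (q (2*j))" using qe ij by auto
      ultimately have "q (2*i) = q (2*j)" by (metis dvd_mult_div_cancel)
      then have "2*i = 2*j" using permutes_inj[OF q] by (auto dest: injD)
      then show "i = j" by simp
    qed
    show "m \<in> {0..<n} \<rightarrow> {0..<n}"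
    proof
      fix i assume "i \<in> {0..<n}"
      then have "q (2*i) < 2*n" using qlt by auto
      then show "m i \<in> {0..<n}" using \<open>i \<in> {0..<n}\<close> unfolding m_def by auto
    qed
    show "finite {0..<n}" by simp
    show "\<And>i. i \<notin> {0..<n} \<Longrightarrow> m i = i" unfolding m_def by auto
  qed
  have qd: "q = dbl n m"
  proof
    fix x show "q x = dbl n m x"
    proof (cases "x < 2*n")
      case True
      define i where "i = x div 2"
      have i: "i < n" using True unfolding i_def by auto
      have ev: "2 * (q (2*i) div 2) = q (2*i)" using qe[OF i] by auto
      show ?thesis
      proof (cases "even x")
        case True
        then have "x = 2*i" unfolding i_def by auto
        then show ?thesis using \<open>x < 2*n\<close> i ev \<open>even x\<close> unfolding dbl_def m_def i_def by auto
      next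
        case False
        then have x: "x = 2*i+1" unfolding i_def by presburger
        have "q x = q (2*i) + 1" using qe[OF i] x by simp
        moreover have "x mod 2 = 1" using \<open>odd x\<close> by presburger
        ultimately show ?thesis using \<open>x < 2*n\<close> i ev \<open>odd x\<close> unfolding dbl_def m_def i_def[symmetric] by auto
      qed
    next
      case False
      then show ?thesis using permutes_not_in[OF q, of x] unfolding dbl_def by auto
    qed
  qed
  have "sign q = 1" unfolding qd using dbl_sign[OF mperm] by simp
  then have "tt n q = 1" unfolding tt_def prod1 by simp
  then show ?thesis using tteq unfolding q_def by simp
qed

lemma pfx_J_pos: "pfx n (Jm n) > 0"
proof -
  have "pfx n (Jm n) = (\<Sum>p\<in>{p. p permutes {0..<2*n}}. tt n p)"
    unfolding pfx_def tt_def
  proof (rule sum.cong[OF refl])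
    fix p assume "p \<in> {p. p permutes {0..<2*n}}"
    then have p: "p permutes {0..<2*n}" by simp
    have lt: "p (2*i) < 2*n" "p(2*i+1) < 2*n" if "i<n" for i
      using permutes_in_image[OF p, of "2*i"] permutes_in_image[OF p, of "2*i+1"] that by auto
    have "(\<Prod>i<n. Jm n $$ (p (2*i), p (2*i+1))) = (\<Prod>i<n. jf (p (2*i)) (p (2*i+1)))"
      by (rule prod.cong[OF refl]) (use lt in \<open>auto simp: Jm_def\<close>)
    then show "signof p * (\<Prod>i<n. Jm n $$ (p (2*i), p (2*i+1))) = signof p * (\<Prod>i<n. jf (p (2*i)) (p (2*i+1)))"
      by simp
  qed
  also have "\<dots> \<ge> tt n id"
    by (rule member_le_sum) (auto intro: tt_nonneg finite_permutations permutes_id permutes_id[unfolded id_def])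
  finally have "pfx n (Jm n) \<ge> tt n id" .
  moreover have "tt n id = 1" unfolding tt_def by (simp add: jf_def)
  ultimately show ?thesis by simp
qed



definition sg :: "nat \<Rightarrow> nat set \<Rightarrow> complex" where
  "sg j T = (-1) ^ card {k\<in>T. k < j}"

lemma sg_sq[simp]: "sg j T * sg j T = 1"
  unfolding sg_def by (simp flip: power_add)

lemma sg_insert:
  assumes "finite T" "k \<notin> T"
  shows "sg j (insert k T) = (if k < j then - sg j T else sg j T)"
proof (cases "k < j")
  case True
  then have "{x\<in>insert k T. x < j} = insert k {x\<in>T. x < j}" by auto
  moreover have "k \<notin> {x\<in>T. x < j}" using assms by auto
  moreover have "finite {x\<in>T. x < j}" using assms by auto
  ultimately show ?thesis using True unfolding sg_def by simp
next
  case False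
  then have "{x\<in>insert k T. x < j} = {x\<in>T. x < j}" by auto
  then show ?thesis using False unfolding sg_def by simp
qed

lemma sg_remove:
  assumes "finite T" "k \<in> T"
  shows "sg j (T - {k}) = (if k < j then - sg j T else sg j T)"
proof -
  have T: "T = insert k (T - {k})" using assms by auto
  have "sg j T = (if k < j then - sg j (T - {k}) else sg j (T - {k}))"
    by (subst T, rule sg_insert) (use assms in auto)
  then show ?thesis by auto
qed

lemma sg_self_insert[simp]: "sg k (insert k T) = sg k T"
proof -
  have "{x\<in>insert k T. x < k} = {x\<in>T. x < k}" by auto
  then show ?thesis unfolding sg_def by simp
qed

lemma sg_self_remove[simp]: "sg k (T - {k}) = sg k T"
proof -
  have "{x\<in>T - {k}. x < k} = {x\<in>T. x < k}" by auto
  then show ?thesis unfolding sg_def by simp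
qed

lemma ann_eq: "ann j S T = (if j \<in> T \<and> S = T - {j} then sg j T else 0)"
  unfolding ann_def sg_def by simp

lemma cre_eq: "cre j S T = (if j \<in> S \<and> T = S - {j} then sg j S else 0)"
  unfolding cre_def op_adj_def ann_def sg_def by simp

lemma opm_ann:
  assumes "T \<subseteq> {1..L}"
  shows "op_mul L X (ann k) S T = (if k \<in> T then X S (T - {k}) * sg k T else 0)"
proof -
  have "op_mul L X (ann k) S T = (\<Sum>U\<in>Pow {1..L}. if U = T - {k} then (if k \<in> T then X S U * sg k T else 0) else 0)"
    unfolding op_mul_def ann_eq by (rule sum.cong) auto
  also have "\<dots> = (if k \<in> T then X S (T - {k}) * sg k T else 0)"
    using assms by (subst sum.delta) auto
  finally show ?thesis .
qed

lemma opm_cre: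
  assumes "T \<subseteq> {1..L}" "k \<in> {1..L}"
  shows "op_mul L X (cre k) S T = (if k \<notin> T then X S (insert k T) * sg k T else 0)"
proof -
  have "op_mul L X (cre k) S T = (\<Sum>U\<in>Pow {1..L}. if U = insert k T then (if k \<notin> T then X S U * sg k T else 0) else 0)"
    unfolding op_mul_def cre_eq by (rule sum.cong) auto
  also have "\<dots> = (if k \<notin> T then X S (insert k T) * sg k T else 0)"
    using assms by (subst sum.delta) auto
  finally show ?thesis .
qed

lemma car_aa:
  assumes "T \<subseteq> {1..L}"
  shows "op_mul L (ann j) (ann k) S T = - op_mul L (ann k) (ann j) S T"
proof -
  have fT: "finite T" using assms finite_subset by blast
  show ?thesis
  proof (cases "j = k")
    case True then show ?thesis using assms by (simp add: opm_ann ann_eq)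
  next
    case False
    have "(if k < j then -1 else 1) = - (if j < k then -1 else (1::complex))" using False by auto
    then show ?thesis using assms False fT
      by (auto simp: opm_ann ann_eq sg_remove Diff_insert2[symmetric] insert_commute)
  qed
qed


lemma opm_adj: "op_mul L (op_adj X) (op_adj Y) S T = cnj (op_mul L Y X T S)"
  unfolding op_mul_def op_adj_def by (simp add: mult.commute)

lemma car_cc:
  assumes "S \<subseteq> {1..L}"
  shows "op_mul L (cre j) (cre k) S T = - op_mul L (cre k) (cre j) S T"
  unfolding cre_def opm_adj using car_aa[of S L k j T] assms by simp

lemma car_ac:
  assumes S: "S \<subseteq> {1..L}" and T: "T \<subseteq> {1..L}" and k: "k \<in> {1..L}"
  shows "op_mul L (ann j) (cre k) S T + op_mul L (cre k) (ann j) S T = (if j = k \<and> S = T then 1 else 0)"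
proof -
  have fT: "finite T" using T finite_subset by blast
  have fS: "finite S" using S finite_subset by blast
  have L1: "op_mul L (ann j) (cre k) S T = (if k \<notin> T \<and> j \<in> insert k T \<and> S = insert k T - {j} then sg j (insert k T) * sg k T else 0)"
    using T k by (simp add: opm_cre ann_eq)
  have L2: "op_mul L (cre k) (ann j) S T = (if j \<in> T \<and> k \<in> S \<and> T - {j} = S - {k} then sg k S * sg j T else 0)"
    using T by (simp add: opm_ann cre_eq)
  show ?thesis
  proof (cases "j = k")
    case True
    show ?thesis
    proof (cases "k \<in> T")
      case True
      have "(k \<in> S \<and> T - {k} = S - {k}) = (S = T)" using True by blast
      then show ?thesis unfolding L1 L2 using True \<open>j = k\<close> by auto
    next
      case False
      have "insert k T - {k} = T" using False by simp
      then show ?thesis unfolding L1 L2 using False \<open>j = k\<close> by auto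
    qed
  next
    case False
    have e1: "insert k T - {j} = insert k (T - {j})" using False by blast
    have e2: "j \<in> T \<Longrightarrow> (k \<in> S \<and> T - {j} = S - {k}) = (k \<notin> T \<and> S = insert k (T - {j}))"
      using False by blast
    show ?thesis
    proof (cases "j \<in> T \<and> k \<notin> T \<and> S = insert k (T - {j})")
      case True
      then have jT: "j \<in> T" and kT: "k \<notin> T" and Seq: "S = insert k (T - {j})" by auto
      have s1: "sg j (insert k T) = (if k < j then - sg j T else sg j T)" using sg_insert[OF fT kT] by simp
      have s2: "sg k S = (if j < k then - sg k T else sg k T)"
        unfolding Seq using sg_remove[OF fT jT, of k] by simp
      have "(if k < j then -1 else 1) = - (if j < k then -1 else (1::complex))" using False by auto
      then have "sg j (insert k T) * sg k T + sg k S * sg j T = 0"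
        unfolding s1 s2 by (auto simp: algebra_simps)
      then show ?thesis unfolding L1 L2 using True e1 e2 False by auto
    next
      case False
      then show ?thesis unfolding L1 L2 using e1 e2 \<open>j \<noteq> k\<close> by auto
    qed
  qed
qed


definition md :: "nat \<Rightarrow> nat \<Rightarrow> nat" where "md L p = (if p < L then p+1 else p-L+1)"
definition al :: "nat \<Rightarrow> real \<Rightarrow> nat \<Rightarrow> complex" where
  "al L \<theta> p = (if p < L then cis (\<theta>/2) else - \<i> * cis (\<theta>/2))"
definition be :: "nat \<Rightarrow> real \<Rightarrow> nat \<Rightarrow> complex" where
  "be L \<theta> p = (if p < L then cis (-\<theta>/2) else \<i> * cis (-\<theta>/2))"

lemma bvec_form: "bvec L \<theta> p = (\<lambda>S T. al L \<theta> p * ann (md L p) S T + be L \<theta> p * cre (md L p) S T)"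
proof (cases "p < L")
  case True
  have "(2*p+1+1) div 2 = p+1" by simp
  then show ?thesis using True unfolding bvec_def maj_def al_def be_def md_def by simp
next
  case False
  have "(2*(p-L)+2) div 2 = p-L+1" by simp
  then show ?thesis using False unfolding bvec_def maj_def al_def be_def md_def by simp
qed

lemma opm_lin_left: "op_mul L (\<lambda>S T. a * X S T + b * Y S T) Z S T = a * op_mul L X Z S T + b * op_mul L Y Z S T"
  unfolding op_mul_def by (simp add: sum.distrib sum_distrib_left algebra_simps)

lemma opm_lin_right: "op_mul L X (\<lambda>S T. a * Y S T + b * Z S T) S T = a * op_mul L X Y S T + b * op_mul L X Z S T"
  unfolding op_mul_def by (simp add: sum.distrib sum_distrib_left algebra_simps)

lemma bb_expand: "op_mul L (bvec L \<theta> p) (bvec L \<theta> q) S T =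
   al L \<theta> p * al L \<theta> q * op_mul L (ann (md L p)) (ann (md L q)) S T
 + al L \<theta> p * be L \<theta> q * op_mul L (ann (md L p)) (cre (md L q)) S T
 + be L \<theta> p * al L \<theta> q * op_mul L (cre (md L p)) (ann (md L q)) S T
 + be L \<theta> p * be L \<theta> q * op_mul L (cre (md L p)) (cre (md L q)) S T"
  unfolding bvec_form opm_lin_left opm_lin_right by (simp add: algebra_simps)

lemma md_range: "p < 2*L \<Longrightarrow> md L p \<in> {1..L}"
  unfolding md_def by auto

lemma cis_half: "cis (\<theta>/2) * cis (-\<theta>/2) = 1"
  by (simp add: cis_mult)

lemma coef:
  assumes "p < 2*L" "q < 2*L" "md L p = md L q"
  shows "al L \<theta> q * be L \<theta> p + be L \<theta> q * al L \<theta> p = (if p = q then 2 else 0)"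
proof -
  have c: "cis (-\<theta>/2) * cis (\<theta>/2) = 1" using cis_half[of \<theta>] by (simp add: mult.commute)
  have "p = q \<or> (p < L \<and> \<not> q < L) \<or> (\<not> p < L \<and> q < L)" using assms unfolding md_def by (auto split: if_splits)
  moreover have "p \<noteq> q" if "(p < L \<and> \<not> q < L) \<or> (\<not> p < L \<and> q < L)" using that by auto
  ultimately show ?thesis unfolding al_def be_def using cis_half[of \<theta>] c
    by (auto simp: algebra_simps)
qed

lemma maj_car:
  assumes p: "p < 2*L" and q: "q < 2*L" and S: "S \<subseteq> {1..L}" and T: "T \<subseteq> {1..L}"
  shows "op_mul L (bvec L \<theta> p) (bvec L \<theta> q) S T + op_mul L (bvec L \<theta> q) (bvec L \<theta> p) S T
     = (if p = q \<and> S = T then 2 else 0)"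
proof -
  define m where "m = md L p"
  define n where "n = md L q"
  have m: "m \<in> {1..L}" and n: "n \<in> {1..L}" using md_range p q unfolding m_def n_def by auto
  define \<delta> where "\<delta> = (if m = n \<and> S = T then (1::complex) else 0)"
  have f1: "op_mul L (ann n) (ann m) S T = - op_mul L (ann m) (ann n) S T" by (rule car_aa[OF T])
  have f2: "op_mul L (cre n) (cre m) S T = - op_mul L (cre m) (cre n) S T" by (rule car_cc[OF S])
  have f3: "op_mul L (ann n) (cre m) S T = \<delta> - op_mul L (cre m) (ann n) S T"
    using car_ac[OF S T m, of n] unfolding \<delta>_def by (auto simp: algebra_simps)
  have f4: "op_mul L (cre n) (ann m) S T = \<delta> - op_mul L (ann m) (cre n) S T"
    using car_ac[OF S T n, of m] unfolding \<delta>_def by (auto simp: algebra_simps)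
  have "op_mul L (bvec L \<theta> p) (bvec L \<theta> q) S T + op_mul L (bvec L \<theta> q) (bvec L \<theta> p) S T
     = \<delta> * (al L \<theta> q * be L \<theta> p + be L \<theta> q * al L \<theta> p)"
    unfolding bb_expand m_def[symmetric] n_def[symmetric] f1 f2 f3 f4 by (simp add: algebra_simps)
  also have "\<dots> = (if p = q \<and> S = T then 2 else 0)"
  proof (cases "m = n")
    case True
    then show ?thesis unfolding \<delta>_def using coef[OF p q, of \<theta>] m_def n_def by auto
  next
    case False
    then have "p \<noteq> q" unfolding m_def n_def by auto
    then show ?thesis unfolding \<delta>_def using False by auto
  qed
  finally show ?thesis .
qed


lemma opm_assoc: "op_mul L (op_mul L X Y) Z S T = op_mul L X (op_mul L Y Z) S T"
proof -
  have "op_mul L (op_mul L X Y) Z S T = (\<Sum>V\<in>Pow {1..L}. \<Sum>U\<in>Pow {1..L}. X S U * Y U V * Z V T)"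
    unfolding op_mul_def by (simp add: sum_distrib_right)
  also have "\<dots> = (\<Sum>U\<in>Pow {1..L}. \<Sum>V\<in>Pow {1..L}. X S U * Y U V * Z V T)" by (rule sum.swap)
  also have "\<dots> = op_mul L X (op_mul L Y Z) S T"
    unfolding op_mul_def by (simp add: sum_distrib_left mult.assoc)
  finally show ?thesis .
qed

lemma opm_id_right:
  assumes "T \<subseteq> {1..L}"
  shows "op_mul L X (\<lambda>U V. (if U = V then c else 0) - Y U V) S T = c * X S T - op_mul L X Y S T"
proof -
  have "op_mul L X (\<lambda>U V. (if U = V then c else 0) - Y U V) S T
      = (\<Sum>U\<in>Pow {1..L}. X S U * (if U = T then c else 0)) - op_mul L X Y S T"
    unfolding op_mul_def by (simp add: right_diff_distrib sum_subtractf)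
  also have "(\<Sum>U\<in>Pow {1..L}. X S U * (if U = T then c else 0)) = (\<Sum>U\<in>Pow {1..L}. if U = T then X S U * c else 0)"
    by (rule sum.cong) auto
  also have "(\<Sum>U\<in>Pow {1..L}. if U = T then X S U * c else 0) = c * X S T"
    using assms by (subst sum.delta) auto
  finally show ?thesis .
qed

lemma opm_id_left:
  assumes "S \<subseteq> {1..L}"
  shows "op_mul L (\<lambda>U V. (if U = V then c else 0) - Y U V) X S T = c * X S T - op_mul L Y X S T"
proof -
  have "op_mul L (\<lambda>U V. (if U = V then c else 0) - Y U V) X S T
      = (\<Sum>U\<in>Pow {1..L}. (if S = U then c else 0) * X U T) - op_mul L Y X S T"
    unfolding op_mul_def by (simp add: left_diff_distrib sum_subtractf)
  also have "(\<Sum>U\<in>Pow {1..L}. (if S = U then c else 0) * X U T) = (\<Sum>U\<in>Pow {1..L}. if S = U then c * X U T else 0)"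
    by (rule sum.cong) auto
  also have "(\<Sum>U\<in>Pow {1..L}. if S = U then c * X U T else 0) = c * X S T"
    using assms by (subst sum.delta') auto
  finally show ?thesis .
qed

lemma opm_cong_right:
  assumes "T \<subseteq> {1..L}" "\<And>U. U \<subseteq> {1..L} \<Longrightarrow> Y U T = Y' U T"
  shows "op_mul L X Y S T = op_mul L X Y' S T"
  unfolding op_mul_def using assms by (intro sum.cong) auto

lemma opm_cong_left:
  assumes "S \<subseteq> {1..L}" "\<And>U. U \<subseteq> {1..L} \<Longrightarrow> X S U = X' S U"
  shows "op_mul L X Y S T = op_mul L X' Y S T"
  unfolding op_mul_def using assms by (intro sum.cong) auto

lemma triple:
  assumes p: "p < 2*L" and q: "q < 2*L" and r: "r < 2*L" and S: "S \<subseteq> {1..L}" and T: "T \<subseteq> {1..L}"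
  shows "op_mul L (op_mul L (bvec L \<theta> p) (bvec L \<theta> q)) (bvec L \<theta> r) S T
    = (if q = r then 2 else 0) * bvec L \<theta> p S T - (if p = r then 2 else 0) * bvec L \<theta> q S T
      + op_mul L (bvec L \<theta> r) (op_mul L (bvec L \<theta> p) (bvec L \<theta> q)) S T"
proof -
  let ?b = "bvec L \<theta>"
  have e2: "op_mul L (?b p) (op_mul L (?b q) (?b r)) S T
      = op_mul L (?b p) (\<lambda>U V. (if U = V then (if q = r then 2 else 0) else 0) - op_mul L (?b r) (?b q) U V) S T"
  proof (rule opm_cong_right[OF T])
    fix U assume U: "U \<subseteq> {1..L}"
    from maj_car[OF q r U T, of \<theta>] show "op_mul L (?b q) (?b r) U T =
      (if U = T then (if q = r then 2 else 0) else 0) - op_mul L (?b r) (?b q) U T"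
      by (auto simp: algebra_simps)
  qed
  have e4: "op_mul L (op_mul L (?b p) (?b r)) (?b q) S T
      = op_mul L (\<lambda>U V. (if U = V then (if p = r then 2 else 0) else 0) - op_mul L (?b r) (?b p) U V) (?b q) S T"
  proof (rule opm_cong_left[OF S])
    fix U assume U: "U \<subseteq> {1..L}"
    from maj_car[OF p r S U, of \<theta>] show "op_mul L (?b p) (?b r) S U =
      (if S = U then (if p = r then 2 else 0) else 0) - op_mul L (?b r) (?b p) S U"
      by (auto simp: algebra_simps)
  qed
  have "op_mul L (op_mul L (?b p) (?b q)) (?b r) S T = op_mul L (?b p) (op_mul L (?b q) (?b r)) S T"
    by (rule opm_assoc)
  also have "\<dots> = (if q = r then 2 else 0) * ?b p S T - op_mul L (?b p) (op_mul L (?b r) (?b q)) S T"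
    unfolding e2 by (rule opm_id_right[OF T])
  also have "op_mul L (?b p) (op_mul L (?b r) (?b q)) S T = op_mul L (op_mul L (?b p) (?b r)) (?b q) S T"
    by (rule opm_assoc[symmetric])
  also have "\<dots> = (if p = r then 2 else 0) * ?b q S T - op_mul L (op_mul L (?b r) (?b p)) (?b q) S T"
    unfolding e4 by (rule opm_id_left[OF S])
  also have "op_mul L (op_mul L (?b r) (?b p)) (?b q) S T = op_mul L (?b r) (op_mul L (?b p) (?b q)) S T"
    by (rule opm_assoc)
  finally show ?thesis by (simp add: algebra_simps)
qed


lemma opm_sum2_left:
  "op_mul L (\<lambda>S T. c * (\<Sum>p\<in>P. \<Sum>q\<in>Q. g p q * F p q S T)) Z S T
     = c * (\<Sum>p\<in>P. \<Sum>q\<in>Q. g p q * op_mul L (F p q) Z S T)"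
proof -
  have "op_mul L (\<lambda>S T. c * (\<Sum>p\<in>P. \<Sum>q\<in>Q. g p q * F p q S T)) Z S T
      = (\<Sum>U\<in>Pow {1..L}. \<Sum>p\<in>P. \<Sum>q\<in>Q. c * (g p q * (F p q S U * Z U T)))"
    unfolding op_mul_def by (simp add: sum_distrib_left sum_distrib_right mult.assoc)
  also have "\<dots> = (\<Sum>p\<in>P. \<Sum>U\<in>Pow {1..L}. \<Sum>q\<in>Q. c * (g p q * (F p q S U * Z U T)))"
    by (rule sum.swap)
  also have "\<dots> = (\<Sum>p\<in>P. \<Sum>q\<in>Q. \<Sum>U\<in>Pow {1..L}. c * (g p q * (F p q S U * Z U T)))"
    by (rule sum.cong[OF refl], rule sum.swap)
  also have "\<dots> = c * (\<Sum>p\<in>P. \<Sum>q\<in>Q. g p q * op_mul L (F p q) Z S T)"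
    unfolding op_mul_def by (simp add: sum_distrib_left)
  finally show ?thesis .
qed

lemma opm_sum2_right:
  "op_mul L Z (\<lambda>S T. c * (\<Sum>p\<in>P. \<Sum>q\<in>Q. g p q * F p q S T)) S T
     = c * (\<Sum>p\<in>P. \<Sum>q\<in>Q. g p q * op_mul L Z (F p q) S T)"
proof -
  have "op_mul L Z (\<lambda>S T. c * (\<Sum>p\<in>P. \<Sum>q\<in>Q. g p q * F p q S T)) S T
      = (\<Sum>U\<in>Pow {1..L}. \<Sum>p\<in>P. \<Sum>q\<in>Q. c * (g p q * (Z S U * F p q U T)))"
    unfolding op_mul_def by (simp add: sum_distrib_left sum_distrib_right ac_simps)
  also have "\<dots> = (\<Sum>p\<in>P. \<Sum>U\<in>Pow {1..L}. \<Sum>q\<in>Q. c * (g p q * (Z S U * F p q U T)))"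
    by (rule sum.swap)
  also have "\<dots> = (\<Sum>p\<in>P. \<Sum>q\<in>Q. \<Sum>U\<in>Pow {1..L}. c * (g p q * (Z S U * F p q U T)))"
    by (rule sum.cong[OF refl], rule sum.swap)
  also have "\<dots> = c * (\<Sum>p\<in>P. \<Sum>q\<in>Q. g p q * op_mul L Z (F p q) S T)"
    unfolding op_mul_def by (simp add: sum_distrib_left)
  finally show ?thesis .
qed

lemma maj_quad_ext: "maj_quad L \<theta> A = (\<lambda>S T. (\<i>/2) * (\<Sum>p\<in>{..<2*L}. \<Sum>q\<in>{..<2*L}.
    complex_of_real (A $$ (p,q)) * op_mul L (bvec L \<theta> p) (bvec L \<theta> q) S T))"
  unfolding maj_quad_def by simp

lemma skew_entry:
  assumes "C \<in> carrier_mat N N" "transpose_mat C = - C" "p < N" "r < N"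
  shows "C $$ (p, r) = - C $$ (r, p)"
proof -
  have e1: "transpose_mat C $$ (r, p) = C $$ (p, r)" using assms(1,3,4) by simp
  have e2: "(- C) $$ (r, p) = - C $$ (r, p)" using assms(1,3,4) by simp
  show ?thesis using e1 e2 assms(2) by metis
qed

lemma quad_comm:
  assumes C: "C \<in> carrier_mat (2*L) (2*L)" and sk: "transpose_mat C = - C" and r: "r < 2*L"
    and S: "S \<subseteq> {1..L}" and T: "T \<subseteq> {1..L}"
  shows "op_mul L (maj_quad L \<theta> C) (bvec L \<theta> r) S T - op_mul L (bvec L \<theta> r) (maj_quad L \<theta> C) S T
     = - 2 * \<i> * (\<Sum>q\<in>{..<2*L}. complex_of_real (C $$ (r,q)) * bvec L \<theta> q S T)"
proof -
  let ?b = "bvec L \<theta>"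
  let ?c = "\<lambda>p q. complex_of_real (C $$ (p,q))"
  let ?I = "{..<2*L}"
  have "op_mul L (maj_quad L \<theta> C) (?b r) S T - op_mul L (?b r) (maj_quad L \<theta> C) S T
     = (\<i>/2) * (\<Sum>p\<in>?I. \<Sum>q\<in>?I. ?c p q * (op_mul L (op_mul L (?b p) (?b q)) (?b r) S T
           - op_mul L (?b r) (op_mul L (?b p) (?b q)) S T))"
    unfolding maj_quad_ext opm_sum2_left opm_sum2_right
    by (simp add: right_diff_distrib sum_subtractf)
  also have "\<dots> = (\<i>/2) * (\<Sum>p\<in>?I. \<Sum>q\<in>?I. ?c p q * ((if q = r then 2 else 0) * ?b p S T)
          - ?c p q * ((if p = r then 2 else 0) * ?b q S T))"
  proof (intro arg_cong[where f = "\<lambda>x. (\<i>/2) * x"] sum.cong refl)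
    fix p q assume "p \<in> ?I" "q \<in> ?I"
    then have p: "p < 2*L" and q: "q < 2*L" by auto
    have "op_mul L (op_mul L (?b p) (?b q)) (?b r) S T - op_mul L (?b r) (op_mul L (?b p) (?b q)) S T
       = (if q = r then 2 else 0) * ?b p S T - (if p = r then 2 else 0) * ?b q S T"
      using triple[OF p q r S T, of \<theta>] by simp
    then show "?c p q * (op_mul L (op_mul L (?b p) (?b q)) (?b r) S T - op_mul L (?b r) (op_mul L (?b p) (?b q)) S T)
       = ?c p q * ((if q = r then 2 else 0) * ?b p S T) - ?c p q * ((if p = r then 2 else 0) * ?b q S T)"
      by (simp add: right_diff_distrib)
  qed
  also have "\<dots> = (\<i>/2) * ((\<Sum>p\<in>?I. \<Sum>q\<in>?I. ?c p q * ((if q = r then 2 else 0) * ?b p S T))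
          - (\<Sum>p\<in>?I. \<Sum>q\<in>?I. ?c p q * ((if p = r then 2 else 0) * ?b q S T)))"
    by (simp add: sum_subtractf)
  also have "(\<Sum>p\<in>?I. \<Sum>q\<in>?I. ?c p q * ((if q = r then 2 else 0) * ?b p S T)) = (\<Sum>p\<in>?I. 2 * ?c p r * ?b p S T)"
  proof (rule sum.cong[OF refl])
    fix p
    have "(\<Sum>q\<in>?I. ?c p q * ((if q = r then 2 else 0) * ?b p S T)) = (\<Sum>q\<in>?I. if q = r then 2 * ?c p r * ?b p S T else 0)"
      by (rule sum.cong) auto
    also have "\<dots> = 2 * ?c p r * ?b p S T" using r by (subst sum.delta) auto
    finally show "(\<Sum>q\<in>?I. ?c p q * ((if q = r then 2 else 0) * ?b p S T)) = 2 * ?c p r * ?b p S T" .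
  qed
  also have "(\<Sum>p\<in>?I. 2 * ?c p r * ?b p S T) = - (\<Sum>p\<in>?I. 2 * ?c r p * ?b p S T)"
    by (simp add: sum_negf[symmetric] skew_entry[OF C sk _ r])
  also have "(\<Sum>p\<in>?I. \<Sum>q\<in>?I. ?c p q * ((if p = r then 2 else 0) * ?b q S T))
      = (\<Sum>p\<in>?I. if p = r then (\<Sum>q\<in>?I. 2 * ?c r q * ?b q S T) else 0)"
    by (rule sum.cong) (auto simp: algebra_simps)
  also have "\<dots> = (\<Sum>q\<in>?I. 2 * ?c r q * ?b q S T)" using r by (subst sum.delta) auto
  finally show ?thesis by (simp add: sum_distrib_left algebra_simps)
qed


lemma bvec_empty_single:
  "bvec L \<theta> q {} {j} = (if md L q = j then al L \<theta> q else 0)"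
proof -
  have "{k\<in>{j}. k < j} = {}" by auto
  then have sgj: "sg j {j} = 1" unfolding sg_def by (subst \<open>{k\<in>{j}. k < j} = {}\<close>) simp
  have "ann m {} {j} = (if m = j then 1 else 0)" for m
    unfolding ann_eq using sgj by auto
  moreover have "cre m {} {j} = 0" for m unfolding cre_eq by simp
  ultimately show ?thesis unfolding bvec_form by simp
qed

lemma quad_zero:
  assumes C: "C \<in> carrier_mat (2*L) (2*L)" and sk: "transpose_mat C = - C"
    and z: "\<And>S T. S \<subseteq> {1..L} \<Longrightarrow> T \<subseteq> {1..L} \<Longrightarrow> maj_quad L \<theta> C S T = 0"
  shows "C = 0\<^sub>m (2*L) (2*L)"
proof -
  let ?b = "bvec L \<theta>"
  let ?e = "cis (\<theta>/2)"
  have rowz: "C $$ (r, j-1) = 0 \<and> C $$ (r, L+j-1) = 0" if r: "r < 2*L" and j: "j \<in> {1..L}" for r j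
  proof -
    have S: "{} \<subseteq> {1..L}" and T: "{j} \<subseteq> {1..L}" using j by auto
    have z1: "op_mul L (maj_quad L \<theta> C) (?b r) {} {j} = 0"
      unfolding op_mul_def using z[OF S] by (intro sum.neutral) auto
    have z2: "op_mul L (?b r) (maj_quad L \<theta> C) {} {j} = 0"
      unfolding op_mul_def using z[OF _ T] by (intro sum.neutral) auto
    from quad_comm[OF C sk r S T, of \<theta>] z1 z2
    have "(\<Sum>q\<in>{..<2*L}. complex_of_real (C $$ (r,q)) * ?b q {} {j}) = 0" by simp
    moreover have "(\<Sum>q\<in>{..<2*L}. complex_of_real (C $$ (r,q)) * ?b q {} {j})
        = (\<Sum>q\<in>{..<2*L}. (if q = j-1 then complex_of_real (C $$ (r,j-1)) * al L \<theta> (j-1) else 0)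
            + (if q = L+j-1 then complex_of_real (C $$ (r,L+j-1)) * al L \<theta> (L+j-1) else 0))"
      unfolding bvec_empty_single using j by (intro sum.cong refl) (auto simp: md_def)
    moreover have "\<dots> = complex_of_real (C $$ (r,j-1)) * al L \<theta> (j-1) + complex_of_real (C $$ (r,L+j-1)) * al L \<theta> (L+j-1)"
    proof -
      have b1: "j-1 < 2*L" "L+j-1 < 2*L" using j by auto
      then show ?thesis by (simp add: sum.distrib)
    qed
    moreover have "al L \<theta> (j-1) = ?e" "al L \<theta> (L+j-1) = - \<i> * ?e" using j unfolding al_def by auto
    ultimately have "?e * (complex_of_real (C $$ (r,j-1)) - \<i> * complex_of_real (C $$ (r,L+j-1))) = 0"
      by (simp add: algebra_simps)
    moreover have "?e \<noteq> 0" by (simp add: cis_neq_zero)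
    ultimately have "complex_of_real (C $$ (r,j-1)) - \<i> * complex_of_real (C $$ (r,L+j-1)) = 0" by simp
    then have "Re (complex_of_real (C $$ (r,j-1)) - \<i> * complex_of_real (C $$ (r,L+j-1))) = 0"
      "Im (complex_of_real (C $$ (r,j-1)) - \<i> * complex_of_real (C $$ (r,L+j-1))) = 0" by simp_all
    then show ?thesis by simp
  qed
  show ?thesis
  proof (rule eq_matI)
    fix r q assume "r < dim_row (0\<^sub>m (2*L) (2*L))" "q < dim_col (0\<^sub>m (2*L) (2*L))"
    then have r: "r < 2*L" and q: "q < 2*L" by auto
    have "C $$ (r,q) = 0"
    proof (cases "q < L")
      case True
      then show ?thesis using rowz[OF r, of "q+1"] by auto
    next
      case False
      then have "q - L + 1 \<in> {1..L}" "L + (q - L + 1) - 1 = q" using q by auto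
      then show ?thesis using rowz[OF r, of "q-L+1"] by auto
    qed
    then show "C $$ (r,q) = 0\<^sub>m (2*L) (2*L) $$ (r,q)" using r q by simp
  qed (use C in auto)
qed



definition fa :: "nat \<Rightarrow> real \<Rightarrow> real \<Rightarrow> nat \<Rightarrow> nat \<Rightarrow> real" where
  "fa L w c p q = (if 1 \<le> q \<and> q < L \<and> p = L+q-1 then w else 0) + (if p = 2*L-1 \<and> q = 0 then c*w else 0)"

definition aent :: "nat \<Rightarrow> real \<Rightarrow> real \<Rightarrow> nat \<Rightarrow> nat \<Rightarrow> real" where
  "aent L w c p q = fa L w c p q - fa L w c q p"

lemma ofr_if: "complex_of_real (if P then a else 0) * X = (if P then complex_of_real a * X else 0)"
  by simp

definition Akit :: "nat \<Rightarrow> real \<Rightarrow> real \<Rightarrow> real mat" where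
  "Akit L w c = mat (2*L) (2*L) (\<lambda>(p,q). aent L w c p q)"

lemma Akit_carrier: "Akit L w c \<in> carrier_mat (2*L) (2*L)"
  unfolding Akit_def by simp

lemma aent_skew: "aent L w c q p = - aent L w c p q"
  unfolding aent_def by simp

lemma Akit_skew: "transpose_mat (Akit L w c) = - Akit L w c"
proof (rule eq_matI)
  fix i j assume "i < dim_row (- Akit L w c)" "j < dim_col (- Akit L w c)"
  then have ij: "i < 2*L" "j < 2*L" by (simp_all add: Akit_def)
  have "transpose_mat (Akit L w c) $$ (i,j) = aent L w c j i" using ij by (simp add: Akit_def)
  also have "\<dots> = - aent L w c i j" by (rule aent_skew)
  also have "\<dots> = (- Akit L w c) $$ (i,j)" using ij by (simp add: Akit_def)
  finally show "transpose_mat (Akit L w c) $$ (i,j) = (- Akit L w c) $$ (i,j)" .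
qed (simp_all add: Akit_def)

lemma dsum_col:
  "(\<Sum>p\<in>{..<N::nat}. \<Sum>q\<in>{..<N}. if P q \<and> p = h q then f p q else 0)
   = (\<Sum>q\<in>{..<N}. if P q \<and> h q < N then f (h q) q else (0::complex))"
proof -
  have "(\<Sum>p\<in>{..<N::nat}. \<Sum>q\<in>{..<N}. if P q \<and> p = h q then f p q else 0)
     = (\<Sum>q\<in>{..<N}. \<Sum>p\<in>{..<N}. if P q \<and> p = h q then f p q else 0)" by (rule sum.swap)
  also have "\<dots> = (\<Sum>q\<in>{..<N}. if P q \<and> h q < N then f (h q) q else 0)"
  proof (rule sum.cong[OF refl])
    fix q
    have "(\<Sum>p\<in>{..<N}. if P q \<and> p = h q then f p q else 0) = (\<Sum>p\<in>{..<N}. if p = h q then (if P q then f p q else 0) else 0)"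
      by (rule sum.cong) auto
    also have "\<dots> = (if P q \<and> h q < N then f (h q) q else 0)" by (subst sum.delta) auto
    finally show "(\<Sum>p\<in>{..<N}. if P q \<and> p = h q then f p q else 0) = (if P q \<and> h q < N then f (h q) q else 0)" .
  qed
  finally show ?thesis .
qed

lemma dsum_row:
  "(\<Sum>p\<in>{..<N::nat}. \<Sum>q\<in>{..<N}. if P p \<and> q = h p then f p q else 0)
   = (\<Sum>p\<in>{..<N}. if P p \<and> h p < N then f p (h p) else (0::complex))"
proof (rule sum.cong[OF refl])
  fix p
  have "(\<Sum>q\<in>{..<N}. if P p \<and> q = h p then f p q else 0) = (\<Sum>q\<in>{..<N}. if q = h p then (if P p then f p q else 0) else 0)"
    by (rule sum.cong) auto
  also have "\<dots> = (if P p \<and> h p < N then f p (h p) else 0)" by (subst sum.delta) auto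
  finally show "(\<Sum>q\<in>{..<N}. if P p \<and> q = h p then f p q else 0) = (if P p \<and> h p < N then f p (h p) else 0)" .
qed

lemma quad_Akit:
  assumes L: "L \<ge> 2" and S: "S \<subseteq> {1..L}" and T: "T \<subseteq> {1..L}"
  shows "maj_quad L \<theta> (Akit L w c) S T =
     (\<Sum>j\<in>{1..<L}. \<i> * w * op_mul L (bvec L \<theta> (L+j-1)) (bvec L \<theta> j) S T)
     + \<i> * (c*w) * op_mul L (bvec L \<theta> (2*L-1)) (bvec L \<theta> 0) S T"
proof -
  define X where "X p q = op_mul L (bvec L \<theta> p) (bvec L \<theta> q) S T" for p q
  let ?I = "{..<2*L}"
  have pt: "complex_of_real (Akit L w c $$ (p,q)) * X p q =
      (if 1 \<le> q \<and> q < L \<and> p = L+q-1 then w * X p q else 0)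
      + (if p = 2*L-1 \<and> q = 0 then c*w * X p q else 0)
      - (if 1 \<le> p \<and> p < L \<and> q = L+p-1 then w * X p q else 0)
      - (if q = 2*L-1 \<and> p = 0 then c*w * X p q else 0)" if "p \<in> ?I" "q \<in> ?I" for p q
  proof -
    have "complex_of_real (Akit L w c $$ (p,q)) * X p q = complex_of_real (aent L w c p q) * X p q"
      using that unfolding Akit_def by simp
    also have "\<dots> = (if 1 \<le> q \<and> q < L \<and> p = L+q-1 then w * X p q else 0)
      + (if p = 2*L-1 \<and> q = 0 then c*w * X p q else 0)
      - (if 1 \<le> p \<and> p < L \<and> q = L+p-1 then w * X p q else 0)
      - (if q = 2*L-1 \<and> p = 0 then c*w * X p q else 0)"
      unfolding aent_def fa_def of_real_diff of_real_add left_diff_distrib distrib_right ofr_if by simp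
    finally show ?thesis .
  qed
  have "maj_quad L \<theta> (Akit L w c) S T = (\<i>/2) * (\<Sum>p\<in>?I. \<Sum>q\<in>?I. complex_of_real (Akit L w c $$ (p,q)) * X p q)"
    unfolding maj_quad_def X_def by simp
  also have "(\<Sum>p\<in>?I. \<Sum>q\<in>?I. complex_of_real (Akit L w c $$ (p,q)) * X p q) =
      (\<Sum>p\<in>?I. \<Sum>q\<in>?I. if 1 \<le> q \<and> q < L \<and> p = L+q-1 then w * X p q else 0)
    + (\<Sum>p\<in>?I. \<Sum>q\<in>?I. if p = 2*L-1 \<and> q = 0 then c*w * X p q else 0)
    - (\<Sum>p\<in>?I. \<Sum>q\<in>?I. if 1 \<le> p \<and> p < L \<and> q = L+p-1 then w * X p q else 0)
    - (\<Sum>p\<in>?I. \<Sum>q\<in>?I. if q = 2*L-1 \<and> p = 0 then c*w * X p q else 0)"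
    by (simp only: pt sum.distrib sum_subtractf cong: sum.cong)
  also have "(\<Sum>p\<in>?I. \<Sum>q\<in>?I. if 1 \<le> q \<and> q < L \<and> p = L+q-1 then w * X p q else 0)
      = (\<Sum>q\<in>{1..<L}. w * X (L+q-1) q)"
  proof -
    have "(\<Sum>p\<in>?I. \<Sum>q\<in>?I. if 1 \<le> q \<and> q < L \<and> p = L+q-1 then w * X p q else 0)
      = (\<Sum>q\<in>?I. if (1 \<le> q \<and> q < L) \<and> L+q-1 < 2*L then w * X (L+q-1) q else 0)"
      using dsum_col[where N="2*L" and P="\<lambda>q. 1 \<le> q \<and> q < L" and h="\<lambda>q. L+q-1" and f="\<lambda>p q. w * X p q"] by simp
    also have "\<dots> = (\<Sum>q\<in>{q\<in>?I. (1 \<le> q \<and> q < L) \<and> L+q-1 < 2*L}. w * X (L+q-1) q)"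
      by (rule sum.inter_filter[symmetric]) simp
    also have "{q\<in>?I. (1 \<le> q \<and> q < L) \<and> L+q-1 < 2*L} = {1..<L}" by auto
    finally show ?thesis .
  qed
  also have "(\<Sum>p\<in>?I. \<Sum>q\<in>?I. if 1 \<le> p \<and> p < L \<and> q = L+p-1 then w * X p q else 0)
      = (\<Sum>p\<in>{1..<L}. w * X p (L+p-1))"
  proof -
    have "(\<Sum>p\<in>?I. \<Sum>q\<in>?I. if 1 \<le> p \<and> p < L \<and> q = L+p-1 then w * X p q else 0)
      = (\<Sum>p\<in>?I. if (1 \<le> p \<and> p < L) \<and> L+p-1 < 2*L then w * X p (L+p-1) else 0)"
      using dsum_row[where N="2*L" and P="\<lambda>p. 1 \<le> p \<and> p < L" and h="\<lambda>p. L+p-1" and f="\<lambda>p q. w * X p q"] by simp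
    also have "\<dots> = (\<Sum>p\<in>{p\<in>?I. (1 \<le> p \<and> p < L) \<and> L+p-1 < 2*L}. w * X p (L+p-1))"
      by (rule sum.inter_filter[symmetric]) simp
    also have "{p\<in>?I. (1 \<le> p \<and> p < L) \<and> L+p-1 < 2*L} = {1..<L}" by auto
    finally show ?thesis .
  qed
  also have "(\<Sum>p\<in>?I. \<Sum>q\<in>?I. if p = 2*L-1 \<and> q = 0 then c*w * X p q else 0) = c*w * X (2*L-1) 0"
  proof -
    have "(\<Sum>p\<in>?I. \<Sum>q\<in>?I. if p = 2*L-1 \<and> q = 0 then c*w * X p q else 0)
        = (\<Sum>p\<in>?I. if p = 2*L-1 \<and> 0 < 2*L then c*w * X p 0 else 0)"
      using dsum_row[where N="2*L" and P="\<lambda>p. p = 2*L-1" and h="\<lambda>p. 0" and f="\<lambda>p q. c*w * X p q"] by simp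
    also have "\<dots> = c*w * X (2*L-1) 0" using L by simp
    finally show ?thesis .
  qed
  also have "(\<Sum>p\<in>?I. \<Sum>q\<in>?I. if q = 2*L-1 \<and> p = 0 then c*w * X p q else 0) = c*w * X 0 (2*L-1)"
  proof -
    have "(\<Sum>p\<in>?I. \<Sum>q\<in>?I. if q = 2*L-1 \<and> p = 0 then c*w * X p q else 0)
        = (\<Sum>p\<in>?I. \<Sum>q\<in>?I. if p = 0 \<and> q = 2*L-1 then c*w * X p q else 0)"
      by (intro sum.cong refl) auto
    also have "\<dots> = (\<Sum>p\<in>?I. if p = 0 \<and> 2*L-1 < 2*L then c*w * X p (2*L-1) else 0)"
      using dsum_row[where N="2*L" and P="\<lambda>p. p = 0" and h="\<lambda>p. 2*L-1" and f="\<lambda>p q. c*w * X p q"] by simp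
    also have "\<dots> = c*w * X 0 (2*L-1)" using L by simp
    finally show ?thesis .
  qed
  also have "(\<Sum>p\<in>{1..<L}. w * X p (L+p-1)) = (\<Sum>p\<in>{1..<L}. - (w * X (L+p-1) p))"
  proof (rule sum.cong[OF refl])
    fix p assume "p \<in> {1..<L}"
    then have "p < 2*L" "L+p-1 < 2*L" "p \<noteq> L+p-1" using L by auto
    from maj_car[OF this(1,2) S T, of \<theta>] this(3) have "X p (L+p-1) = - X (L+p-1) p" unfolding X_def
      by (simp add: eq_neg_iff_add_eq_0)
    then show "w * X p (L+p-1) = - (w * X (L+p-1) p)" by simp
  qed
  also have "X 0 (2*L-1) = - X (2*L-1) 0"
  proof -
    have "0 < 2*L" "2*L-1 < 2*L" "(0::nat) \<noteq> 2*L-1" using L by auto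
    from maj_car[OF this(1,2) S T, of \<theta>] this(3) show ?thesis unfolding X_def
      by (simp add: eq_neg_iff_add_eq_0)
  qed
  finally show ?thesis unfolding X_def by (simp add: sum_distrib_left sum_negf algebra_simps)
qed


lemma coefs:
  "\<i> * ((- \<i> * cis (\<theta>/2)) * cis (\<theta>/2)) = cis \<theta>"
  "\<i> * ((- \<i> * cis (\<theta>/2)) * cis (-\<theta>/2)) = 1"
  "\<i> * ((\<i> * cis (-\<theta>/2)) * cis (\<theta>/2)) = -1"
  "\<i> * ((\<i> * cis (-\<theta>/2)) * cis (-\<theta>/2)) = - cis (-\<theta>)"
proof -
  have a: "cis (\<theta>/2) * cis (\<theta>/2) = cis \<theta>" by (simp add: cis_mult)
  have b: "cis (-\<theta>/2) * cis (-\<theta>/2) = cis (-\<theta>)" by (simp add: cis_mult)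
  have c: "cis (\<theta>/2) * cis (-\<theta>/2) = 1" by (simp add: cis_mult)
  have d: "cis (-\<theta>/2) * cis (\<theta>/2) = 1" by (simp add: cis_mult)
  show "\<i> * ((- \<i> * cis (\<theta>/2)) * cis (\<theta>/2)) = cis \<theta>" using a by (simp add: algebra_simps)
  show "\<i> * ((- \<i> * cis (\<theta>/2)) * cis (-\<theta>/2)) = 1" using c by (simp add: algebra_simps)
  show "\<i> * ((\<i> * cis (-\<theta>/2)) * cis (\<theta>/2)) = -1" using d by (simp add: algebra_simps)
  show "\<i> * ((\<i> * cis (-\<theta>/2)) * cis (-\<theta>/2)) = - cis (-\<theta>)" using b by (simp add: algebra_simps)
qed

lemma regroup: "\<i> * w * (a1 * a2 * x + a1 * b2 * y + b1 * a2 * z + b1 * b2 * u)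
  = w * ((\<i> * (a1 * a2)) * x + (\<i> * (a1 * b2)) * y + (\<i> * (b1 * a2)) * z + (\<i> * (b1 * b2)) * u)"
  by (simp add: algebra_simps)

lemma bond:
  assumes L: "L \<ge> 2" and j: "1 \<le> j" "j < L" and S: "S \<subseteq> {1..L}" and T: "T \<subseteq> {1..L}"
  shows "\<i> * complex_of_real w * op_mul L (bvec L \<theta> (L+j-1)) (bvec L \<theta> j) S T
    = complex_of_real w * (- op_mul L (cre j) (ann (j+1)) S T - op_mul L (cre (j+1)) (ann j) S T
         + cis \<theta> * op_mul L (ann j) (ann (j+1)) S T + cis (-\<theta>) * op_mul L (cre (j+1)) (cre j) S T)"
proof -
  have m: "md L (L+j-1) = j" "md L j = j+1" using assms by (auto simp: md_def)
  have a: "al L \<theta> (L+j-1) = - \<i> * cis (\<theta>/2)" "be L \<theta> (L+j-1) = \<i> * cis (-\<theta>/2)"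
      "al L \<theta> j = cis (\<theta>/2)" "be L \<theta> j = cis (-\<theta>/2)" using assms by (auto simp: al_def be_def)
  have k: "j+1 \<in> {1..L}" using assms by auto
  have ac: "op_mul L (ann j) (cre (j+1)) S T = - op_mul L (cre (j+1)) (ann j) S T"
    using car_ac[OF S T k, of j] by (simp add: eq_neg_iff_add_eq_0)
  have cc: "op_mul L (cre j) (cre (j+1)) S T = - op_mul L (cre (j+1)) (cre j) S T"
    by (rule car_cc[OF S])
  show ?thesis
    unfolding bb_expand m a regroup coefs ac cc by (simp add: algebra_simps)
qed

lemma boundary:
  assumes L: "L \<ge> 2" and S: "S \<subseteq> {1..L}" and T: "T \<subseteq> {1..L}"
    and ca: "cis \<alpha> = complex_of_real c" "cis (-\<alpha>) = complex_of_real c"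
  shows "\<i> * complex_of_real (c*w) * op_mul L (bvec L \<theta> (2*L-1)) (bvec L \<theta> 0) S T
    = complex_of_real w * (- cis (-\<alpha>) * op_mul L (cre L) (ann 1) S T - cis \<alpha> * op_mul L (cre 1) (ann L) S T
         + cis \<theta> * cis \<alpha> * op_mul L (ann L) (ann 1) S T + cis (-\<theta>) * cis (-\<alpha>) * op_mul L (cre 1) (cre L) S T)"
proof -
  have m: "md L (2*L-1) = L" "md L 0 = 1" using assms by (auto simp: md_def)
  have a: "al L \<theta> (2*L-1) = - \<i> * cis (\<theta>/2)" "be L \<theta> (2*L-1) = \<i> * cis (-\<theta>/2)"
      "al L \<theta> 0 = cis (\<theta>/2)" "be L \<theta> 0 = cis (-\<theta>/2)" using assms by (auto simp: al_def be_def)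
  have k: "1 \<in> {1..L}" using assms by auto
  have ac: "op_mul L (ann L) (cre 1) S T = - op_mul L (cre 1) (ann L) S T"
    using car_ac[OF S T k, of L] L by (simp add: eq_neg_iff_add_eq_0)
  have cc: "op_mul L (cre L) (cre 1) S T = - op_mul L (cre 1) (cre L) S T"
    by (rule car_cc[OF S])
  have "\<i> * complex_of_real (c*w) * op_mul L (bvec L \<theta> (2*L-1)) (bvec L \<theta> 0) S T
     = complex_of_real c * (\<i> * complex_of_real w * op_mul L (bvec L \<theta> (2*L-1)) (bvec L \<theta> 0) S T)"
    by (simp add: algebra_simps)
  also have "\<dots> = complex_of_real c * (complex_of_real w * (cis \<theta> * op_mul L (ann L) (ann 1) S T
     - op_mul L (cre 1) (ann L) S T - op_mul L (cre L) (ann 1) S T + cis (-\<theta>) * op_mul L (cre 1) (cre L) S T))"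
    unfolding bb_expand m a regroup coefs ac cc by (simp add: algebra_simps)
  finally show ?thesis unfolding ca by (simp add: algebra_simps)
qed

lemma kit_exists:
  assumes L: "L \<ge> 2" and ca: "cis \<alpha> = complex_of_real c" "cis (-\<alpha>) = complex_of_real c"
  shows "op_eq L (kit_H L w \<theta> \<alpha>) (maj_quad L \<theta> (Akit L w c))"
  unfolding op_eq_def
proof (intro ballI)
  fix S T assume "S \<in> Pow {1..L}" "T \<in> Pow {1..L}"
  then have S: "S \<subseteq> {1..L}" and T: "T \<subseteq> {1..L}" by auto
  have r: "{1..L-1} = {1..<L}" using L by auto
  show "kit_H L w \<theta> \<alpha> S T = maj_quad L \<theta> (Akit L w c) S T"
    unfolding kit_H_def quad_Akit[OF L S T] r boundary[OF L S T ca, symmetric]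
    apply (intro arg_cong2[where f = "(+)"] sum.cong refl)
    subgoal for j by (rule bond[OF L _ _ S T, symmetric]) auto
    done
qed

lemma maj_quad_minus:
  assumes A: "A \<in> carrier_mat (2*L) (2*L)" and B: "B \<in> carrier_mat (2*L) (2*L)"
  shows "maj_quad L \<theta> (A - B) S T = maj_quad L \<theta> A S T - maj_quad L \<theta> B S T"
proof -
  let ?X = "\<lambda>p q. op_mul L (bvec L \<theta> p) (bvec L \<theta> q) S T"
  have "(\<Sum>p<2*L. \<Sum>q<2*L. complex_of_real ((A - B) $$ (p,q)) * ?X p q)
     = (\<Sum>p<2*L. \<Sum>q<2*L. complex_of_real (A $$ (p,q)) * ?X p q - complex_of_real (B $$ (p,q)) * ?X p q)"
    by (intro sum.cong refl) (use A B in \<open>simp add: left_diff_distrib\<close>)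
  then show ?thesis unfolding maj_quad_def by (simp add: sum_subtractf right_diff_distrib)
qed

lemma kit_A_eq:
  assumes L: "L \<ge> 2" and ca: "cis \<alpha> = complex_of_real c" "cis (-\<alpha>) = complex_of_real c"
  shows "kit_A L w \<theta> \<alpha> = Akit L w c"
  unfolding kit_A_def
proof (rule the_equality)
  show "Akit L w c \<in> carrier_mat (2*L) (2*L) \<and> transpose_mat (Akit L w c) = - Akit L w c
     \<and> op_eq L (kit_H L w \<theta> \<alpha>) (maj_quad L \<theta> (Akit L w c))"
    using Akit_carrier Akit_skew kit_exists[OF L ca] by blast
next
  fix A assume H: "A \<in> carrier_mat (2*L) (2*L) \<and> transpose_mat A = - A \<and> op_eq L (kit_H L w \<theta> \<alpha>) (maj_quad L \<theta> A)"
  then have A: "A \<in> carrier_mat (2*L) (2*L)" and skA: "transpose_mat A = - A"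
    and eqA: "op_eq L (kit_H L w \<theta> \<alpha>) (maj_quad L \<theta> A)" by auto
  have B: "Akit L w c \<in> carrier_mat (2*L) (2*L)" by (rule Akit_carrier)
  have eqB: "op_eq L (kit_H L w \<theta> \<alpha>) (maj_quad L \<theta> (Akit L w c))" by (rule kit_exists[OF L ca])
  have Dc: "A - Akit L w c \<in> carrier_mat (2*L) (2*L)" by (rule minus_carrier_mat[OF B])
  have entA: "A $$ (i,j) = - A $$ (j,i)" if "i < 2*L" "j < 2*L" for i j
  proof -
    have "transpose_mat A $$ (j,i) = (- A) $$ (j,i)" using skA by simp
    then show ?thesis using A that by simp
  qed
  have entB: "Akit L w c $$ (i,j) = - Akit L w c $$ (j,i)" if "i < 2*L" "j < 2*L" for i j
    using that aent_skew[of L w c i j] by (simp add: Akit_def)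
  have Dsk: "transpose_mat (A - Akit L w c) = - (A - Akit L w c)"
  proof (rule eq_matI)
    fix i j assume "i < dim_row (- (A - Akit L w c))" "j < dim_col (- (A - Akit L w c))"
    then have ij: "i < 2*L" "j < 2*L" using A by (auto simp: Akit_def)
    show "transpose_mat (A - Akit L w c) $$ (i,j) = (- (A - Akit L w c)) $$ (i,j)"
      using ij A B entA[OF ij(2,1)] entB[OF ij(2,1)] by simp
  qed (use A B in auto)
  have Dz: "maj_quad L \<theta> (A - Akit L w c) S T = 0" if "S \<subseteq> {1..L}" "T \<subseteq> {1..L}" for S T
    using eqA eqB that unfolding maj_quad_minus[OF A B] op_eq_def by auto
  have "A - Akit L w c = 0\<^sub>m (2*L) (2*L)" by (rule quad_zero[OF Dc Dsk Dz])
  show "A = Akit L w c"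
  proof (rule eq_matI)
    fix i j assume "i < dim_row (Akit L w c)" "j < dim_col (Akit L w c)"
    then have ij: "i < 2*L" "j < 2*L" by (auto simp: Akit_def)
    have "(A - Akit L w c) $$ (i,j) = 0" using \<open>A - Akit L w c = 0\<^sub>m (2*L) (2*L)\<close> ij by simp
    then show "A $$ (i,j) = Akit L w c $$ (i,j)" using ij A B by simp
  qed (use A B in auto)
qed


lemma mono_entry:
  fixes g :: "nat \<Rightarrow> real" and A :: "real mat"
  assumes A: "A \<in> carrier_mat N N" and x: "x < N" and y: "y < N" and tau: "\<And>z. z < N \<Longrightarrow> \<tau> z < N"
  shows "(mat N N (\<lambda>(a,k). if k = \<tau> a then g a else 0) * A * transpose_mat (mat N N (\<lambda>(a,k). if k = \<tau> a then g a else 0))) $$ (x,y)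
     = g x * A $$ (\<tau> x, \<tau> y) * g y"
proof -
  let ?B = "mat N N (\<lambda>(a,k). if k = \<tau> a then g a else (0::real))"
  have Bc: "?B \<in> carrier_mat N N" by simp
  have "(?B * A * transpose_mat ?B) $$ (x,y) = (\<Sum>k\<in>{0..<N}. \<Sum>l\<in>{0..<N}. ?B$$(x,k) * A$$(k,l) * ?B$$(y,l))"
    by (rule BAB_entry[OF Bc A x y])
  also have "\<dots> = (\<Sum>k\<in>{0..<N}. \<Sum>l\<in>{0..<N}. if k = \<tau> x then (if l = \<tau> y then g x * A$$(k,l) * g y else 0) else 0)"
    using x y by (intro sum.cong refl) auto
  also have "\<dots> = (\<Sum>k\<in>{0..<N}. if k = \<tau> x then g x * A$$(k,\<tau> y) * g y else 0)"
    using tau[OF y] by (intro sum.cong refl) auto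
  also have "\<dots> = g x * A $$ (\<tau> x, \<tau> y) * g y"
    using tau[OF x] by simp
  finally show ?thesis .
qed

definition Dm :: "nat \<Rightarrow> real mat" where
  "Dm L = mat (2*L) (2*L) (\<lambda>(a,k). if k = id a then (if a = 0 then -1 else 1) else 0)"

definition tau :: "nat \<Rightarrow> nat \<Rightarrow> nat" where
  "tau L a = (if even a then a div 2 else if a = 1 then 2*L-1 else L + a div 2 - 1)"

definition Qm :: "nat \<Rightarrow> real mat" where
  "Qm L = mat (2*L) (2*L) (\<lambda>(a,k). if k = tau L a then 1 else 0)"

lemma Dm_entry:
  assumes L: "L \<ge> 2" and x: "x < 2*L" and y: "y < 2*L"
  shows "(if x = 0 then -1 else 1) * aent L w 1 x y * (if y = 0 then -1 else 1) = aent L w (-1) x y"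
proof (cases "x = 0")
  case True
  then show ?thesis using L by (cases "y = 0") (auto simp: aent_def fa_def)
next
  case False
  then show ?thesis using L by (cases "y = 0") (auto simp: aent_def fa_def)
qed

lemma Dm_conj:
  assumes L: "L \<ge> 2"
  shows "Dm L * Akit L w 1 * transpose_mat (Dm L) = Akit L w (-1)"
proof (rule eq_matI)
  fix x y assume "x < dim_row (Akit L w (-1))" "y < dim_col (Akit L w (-1))"
  then have x: "x < 2*L" and y: "y < 2*L" by (auto simp: Akit_def)
  have "(Dm L * Akit L w 1 * transpose_mat (Dm L)) $$ (x,y)
     = (if x = 0 then -1 else 1) * Akit L w 1 $$ (id x, id y) * (if y = 0 then -1 else 1)"
    unfolding Dm_def by (rule mono_entry[OF Akit_carrier x y]) simp
  also have "\<dots> = aent L w (-1) x y" using Dm_entry[OF L x y, of w] x y by (simp add: Akit_def)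
  finally show "(Dm L * Akit L w 1 * transpose_mat (Dm L)) $$ (x,y) = Akit L w (-1) $$ (x,y)"
    using x y by (simp add: Akit_def)
qed (auto simp: Akit_def Dm_def)

lemma Dm_carrier: "Dm L \<in> carrier_mat (2*L) (2*L)" unfolding Dm_def by simp

lemma Dm_det: assumes "L \<ge> 2" shows "det (Dm L) = -1"
proof -
  have "Dm L = multrow_mat (2*L) 0 (-1)"
    unfolding Dm_def multrow_mat_def by (rule eq_matI) auto
  then show ?thesis using det_multrow_mat[of 0 "2*L" "-1::real"] assms by simp
qed

lemma Dm_inv: "invertible_mat (Dm L)"
proof -
  have tr: "transpose_mat (Dm L) = Dm L" unfolding Dm_def by (rule eq_matI) auto
  have "Dm L * 1\<^sub>m (2*L) * transpose_mat (Dm L) = 1\<^sub>m (2*L)"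
  proof (rule eq_matI)
    fix x y assume "x < dim_row (1\<^sub>m (2*L) :: real mat)" "y < dim_col (1\<^sub>m (2*L) :: real mat)"
    then have x: "x < 2*L" and y: "y < 2*L" by auto
    have "(Dm L * 1\<^sub>m (2*L) * transpose_mat (Dm L)) $$ (x,y)
       = (if x = 0 then -1 else 1) * (1\<^sub>m (2*L) :: real mat) $$ (id x, id y) * (if y = 0 then -1 else 1)"
      unfolding Dm_def by (rule mono_entry[OF one_carrier_mat x y]) simp
    then show "(Dm L * 1\<^sub>m (2*L) * transpose_mat (Dm L)) $$ (x,y) = (1\<^sub>m (2*L) :: real mat) $$ (x,y)"
      using x y by auto
  qed (auto simp: Dm_def)
  then have "Dm L * Dm L = 1\<^sub>m (2*L)" using tr Dm_carrier[of L] by simp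
  then show ?thesis unfolding invertible_mat_def inverts_mat_def square_mat.simps
    using Dm_carrier[of L] by auto
qed

lemma tau_lt: "L \<ge> 2 \<Longrightarrow> a < 2*L \<Longrightarrow> tau L a < 2*L"
  unfolding tau_def by auto

lemma fa_lowrow: "i < L \<Longrightarrow> L \<ge> 2 \<Longrightarrow> fa L w c i q = 0"
  unfolding fa_def by auto
lemma fa_highcol: "q \<ge> L \<Longrightarrow> fa L w c p q = (if p = 2*L-1 \<and> q = 0 then c*w else 0)"
  unfolding fa_def by auto

lemma c_ee: "L \<ge> 2 \<Longrightarrow> i < L \<Longrightarrow> k < L \<Longrightarrow> aent L w 1 i k = 0"
  unfolding aent_def by (simp add: fa_lowrow)

lemma c_oo: "L \<ge> 2 \<Longrightarrow> i < L \<Longrightarrow> k < L \<Longrightarrow>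
   aent L w 1 (if i = 0 then 2*L-1 else L+i-1) (if k = 0 then 2*L-1 else L+k-1) = 0"
  unfolding aent_def by (cases "i = 0"; cases "k = 0") (simp_all add: fa_highcol)

lemma c_oe:
  assumes L: "L \<ge> 2" and i: "i < L" and k: "k < L"
  shows "aent L w 1 (if i = 0 then 2*L-1 else L+i-1) k = (if i = k then w else 0)"
proof (cases "i = 0")
  case True
  have t: "(if i = 0 then 2*L-1 else L+i-1) = 2*L-1" using True by simp
  have z: "fa L w 1 k (2*L-1) = 0" by (rule fa_lowrow) (use k L in auto)
  have e1: "(1 \<le> k \<and> k < L \<and> 2*L-1 = L+k-1) = False" using k L by auto
  have e2: "(2*L-1 = 2*L-1 \<and> k = 0) = (i = k)" using True by auto
  have f: "fa L w 1 (2*L-1) k = (if i = k then w else 0)" unfolding fa_def e1 e2 by simp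
  show ?thesis unfolding t aent_def z f by simp
next
  case False
  have t: "(if i = 0 then 2*L-1 else L+i-1) = L+i-1" using False by simp
  have z: "fa L w 1 k (L+i-1) = 0" by (rule fa_lowrow) (use k L in auto)
  have e1: "(1 \<le> k \<and> k < L \<and> L+i-1 = L+k-1) = (i = k)" using k L i False by auto
  have e2: "(L+i-1 = 2*L-1 \<and> k = 0) = False" using i L by auto
  have f: "fa L w 1 (L+i-1) k = (if i = k then w else 0)" unfolding fa_def e1 e2 by simp
  show ?thesis unfolding t aent_def z f by simp
qed

lemma c_eo:
  assumes L: "L \<ge> 2" and i: "i < L" and k: "k < L"
  shows "aent L w 1 i (if k = 0 then 2*L-1 else L+k-1) = (if i = k then -w else 0)"
proof -
  have "aent L w 1 i (if k = 0 then 2*L-1 else L+k-1) = - aent L w 1 (if k = 0 then 2*L-1 else L+k-1) i"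
    unfolding aent_def by simp
  also have "aent L w 1 (if k = 0 then 2*L-1 else L+k-1) i = (if k = i then w else 0)"
    by (rule c_oe[OF L k i])
  finally show ?thesis by auto
qed

lemma jf_vals:
  "jf (2*i) (2*k) = 0" "jf (2*i) (2*k+1) = (if i = k then 1 else 0)"
  "jf (2*i+1) (2*k) = (if i = k then -1 else 0)" "jf (2*i+1) (2*k+1) = 0"
proof -
  have f1: "2*k \<noteq> 2*i+1" and f4: "2*i+1 \<noteq> 2*k+1+1" by presburger+
  show "jf (2*i) (2*k) = 0" unfolding jf_def using f1 by simp
  show "jf (2*i) (2*k+1) = (if i = k then 1 else 0)" unfolding jf_def by auto
  show "jf (2*i+1) (2*k) = (if i = k then -1 else 0)" unfolding jf_def by auto
  show "jf (2*i+1) (2*k+1) = 0" unfolding jf_def using f4 by simp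
qed

lemma tau_vals: "tau L (2*i) = i" "tau L (2*i+1) = (if i = 0 then 2*L-1 else L+i-1)"
  unfolding tau_def by auto

lemma tau_aent:
  assumes L: "L \<ge> 2" and a: "a < 2*L" and b: "b < 2*L"
  shows "aent L w 1 (tau L a) (tau L b) = - w * jf a b"
proof -
  define i where "i = a div 2"
  define k where "k = b div 2"
  have i: "i < L" using a unfolding i_def by auto
  have k: "k < L" using b unfolding k_def by auto
  have ai: "a = 2*i \<or> a = 2*i+1" unfolding i_def by presburger
  have bk: "b = 2*k \<or> b = 2*k+1" unfolding k_def by presburger
  from ai bk show ?thesis
  proof (elim disjE)
    assume A: "a = 2*i" and B: "b = 2*k"
    show ?thesis unfolding A B tau_vals jf_vals using c_ee[OF L i k] by simp
  next
    assume A: "a = 2*i" and B: "b = 2*k+1"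
    show ?thesis unfolding A B tau_vals jf_vals using c_eo[OF L i k, of w] by simp
  next
    assume A: "a = 2*i+1" and B: "b = 2*k"
    show ?thesis unfolding A B tau_vals jf_vals using c_oe[OF L i k, of w] by simp
  next
    assume A: "a = 2*i+1" and B: "b = 2*k+1"
    show ?thesis unfolding A B tau_vals jf_vals using c_oo[OF L i k, of w] by simp
  qed
qed

lemma Qm_conj:
  assumes L: "L \<ge> 2"
  shows "Qm L * Akit L w 1 * transpose_mat (Qm L) = (-w) \<cdot>\<^sub>m Jm L"
proof (rule eq_matI)
  fix x y assume "x < dim_row ((-w) \<cdot>\<^sub>m Jm L)" "y < dim_col ((-w) \<cdot>\<^sub>m Jm L)"
  then have x: "x < 2*L" and y: "y < 2*L" by (auto simp: Jm_def)
  have "(Qm L * Akit L w 1 * transpose_mat (Qm L)) $$ (x,y) = 1 * Akit L w 1 $$ (tau L x, tau L y) * 1"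
    unfolding Qm_def by (rule mono_entry[OF Akit_carrier x y tau_lt[OF L]])
  also have "\<dots> = - w * jf x y"
    using tau_aent[OF L x y, of w] tau_lt[OF L x] tau_lt[OF L y] by (simp add: Akit_def)
  finally show "(Qm L * Akit L w 1 * transpose_mat (Qm L)) $$ (x,y) = ((-w) \<cdot>\<^sub>m Jm L) $$ (x,y)"
    using x y by (simp add: Jm_def)
qed (auto simp: Jm_def Qm_def)

lemma pfx_A0_nz:
  assumes L: "L \<ge> 2" and w: "w \<noteq> 0"
  shows "pfx L (Akit L w 1) \<noteq> 0"
proof
  assume z: "pfx L (Akit L w 1) = 0"
  have Qc: "Qm L \<in> carrier_mat (2*L) (2*L)" unfolding Qm_def by simp
  have Jc: "Jm L \<in> carrier_mat (2*L) (2*L)" unfolding Jm_def by simp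
  have "pfx L ((-w) \<cdot>\<^sub>m Jm L) = det (Qm L) * pfx L (Akit L w 1)"
    unfolding Qm_conj[OF L, symmetric] by (rule pfx_law[OF Qc Akit_carrier])
  also have "\<dots> = 0" using z by simp
  finally have "(-w)^L * pfx L (Jm L) = 0" using pfx_smult[OF Jc] by simp
  then show False using w pfx_J_pos[of L] by simp
qed

theorem proposition3p12:
  fixes L :: nat and w \<theta> :: real
  assumes "L \<ge> 2" and "w \<noteq> 0"
  shows "Sf2 (kit_A L w \<theta> 0) (kit_A L w \<theta> pi) = -1"
proof -
  have L: "L \<ge> 2" by (rule assms(1))
  have k0: "kit_A L w \<theta> 0 = Akit L w 1" by (rule kit_A_eq[OF L]) simp_all
  have kp: "kit_A L w \<theta> pi = Akit L w (-1)" by (rule kit_A_eq[OF L]) (simp_all add: complex_eq_iff)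
  let ?A0 = "Akit L w 1" and ?A1 = "Akit L w (-1)"
  have dim: "dim_row ?A0 = 2*L" by (simp add: Akit_def)
  define P where "P s = (\<exists>M \<in> carrier_mat (2*L) (2*L). invertible_mat M \<and> ?A1 = M * ?A0 * transpose_mat M \<and> s = sgn (det M))" for s
  have ex: "P (-1)"
    unfolding P_def using Dm_carrier[of L] Dm_inv[of L] Dm_conj[OF L, of w] Dm_det[OF L] by force
  have uq: "s = -1" if "P s" for s
  proof -
    from that obtain M where M: "M \<in> carrier_mat (2*L) (2*L)" and eq: "?A1 = M * ?A0 * transpose_mat M"
      and s: "s = sgn (det M)" unfolding P_def by auto
    have "pfx L ?A1 = det M * pfx L ?A0" unfolding eq by (rule pfx_law[OF M Akit_carrier])
    moreover have "pfx L ?A1 = det (Dm L) * pfx L ?A0"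
      unfolding Dm_conj[OF L, symmetric] by (rule pfx_law[OF Dm_carrier Akit_carrier])
    ultimately have "det M * pfx L ?A0 = - pfx L ?A0" using Dm_det[OF L] by simp
    then have "(det M + 1) * pfx L ?A0 = 0" by (simp add: algebra_simps)
    then have "det M + 1 = 0" using pfx_A0_nz[OF L assms(2)] by simp
    then have "det M = -1" by simp
    then show ?thesis using s by simp
  qed
  have "Sf2 ?A0 ?A1 = (SOME s. P s)" unfolding Sf2_def dim P_def by simp
  also have "\<dots> = -1" using someI[of P, OF ex] uq by blast
  finally show ?thesis unfolding k0 kp .
qed

end
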